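(* Let $\mathbb{F}$ be a field with $\operatorname{char}\mathbb{F}\neq 2$, let $V$ be a finite-dimensional $\mathbb{F}$-vector space of odd dimension $n$, and let $Q:V\to\mathbb{F}$ be a non-degenerate quadratic form with polarization $b$. Let $G\leq O(V,Q)$ be a finite solvable subgroup that acts irreducibly on $V$. Then there exists an orthogonal decomposition $V=W_1\perp\cdots\perp W_n$ (orthogonal with respect to $b$) such that $\dim W_i=1$ for all $1\leq i\leq n$ and $G$ permutes the set $\{W_1,\ldots,W_n\}$.
   Context: $O(V,Q)=\{g\in\operatorname{GL}(V): Q(gv)=Q(v)\text{ for all }v\in V\}$ is the isometry group of $Q$. "Irreducible" means $V$ has no $G$-invariant subspaces other than $0$ and $V$. *)

theory Defs
  imports "HOL-Analysis.Analysis" "HOL-Algebra.Solvable_Groups"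
begin

text \<open>V is modelled as the coordinate space 'a^'n over a field 'a (every finite-dimensional
vector space of dimension CARD('n) is of this form).\<close>

definition is_quadratic_form :: "('a::field ^ 'n \<Rightarrow> 'a) \<Rightarrow> bool" where
  "is_quadratic_form Q \<longleftrightarrow> (\<exists>c :: 'n \<Rightarrow> 'n \<Rightarrow> 'a. \<forall>v. Q v = (\<Sum>i\<in>UNIV. \<Sum>j\<in>UNIV. c i j * v $ i * v $ j))"

definition polarization :: "('a::field ^ 'n \<Rightarrow> 'a) \<Rightarrow> 'a ^ 'n \<Rightarrow> 'a ^ 'n \<Rightarrow> 'a" where
  "polarization Q u v = Q (u + v) - Q u - Q v"

definition nondegenerate :: "('a::field ^ 'n \<Rightarrow> 'a) \<Rightarrow> bool" where
  "nondegenerate Q \<longleftrightarrow> (\<forall>u. (\<forall>v. polarization Q u v = 0) \<longrightarrow> u = 0)"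

definition GL :: "('a::field ^ 'n \<Rightarrow> 'a ^ 'n) set" where
  "GL = {g. Vector_Spaces.linear (*s) (*s) g \<and> bij g}"

definition orth_set :: "('a::field ^ 'n \<Rightarrow> 'a) \<Rightarrow> ('a ^ 'n \<Rightarrow> 'a ^ 'n) set" where
  "orth_set Q = {g \<in> GL. \<forall>v. Q (g v) = Q v}"

definition orth_group :: "('a::field ^ 'n \<Rightarrow> 'a) \<Rightarrow> ('a ^ 'n \<Rightarrow> 'a ^ 'n) monoid" where
  "orth_group Q = \<lparr>carrier = orth_set Q, monoid.mult = (\<lambda>f g. f \<circ> g), one = id\<rparr>"

definition acts_irreducibly :: "('a::field ^ 'n \<Rightarrow> 'a ^ 'n) set \<Rightarrow> bool" where
  "acts_irreducibly G \<longleftrightarrow>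
     (\<forall>U. vec.subspace U \<and> (\<forall>g\<in>G. g ` U \<subseteq> U) \<longrightarrow> U = {0} \<or> U = UNIV)"

end

theory Submission
  imports Defs
begin

lemma polar_formula:
  assumes "is_quadratic_form (Q :: 'a::field ^ 'n \<Rightarrow> 'a)"
  shows "\<exists>c. \<forall>u v. polarization Q u v = (\<Sum>i\<in>UNIV. \<Sum>j\<in>UNIV. c i j * (u$i * v$j + v$i * u$j))"
proof -
  obtain c where c: "\<forall>v. Q v = (\<Sum>i\<in>UNIV. \<Sum>j\<in>UNIV. c i j * v $ i * v $ j)"
    using assms unfolding is_quadratic_form_def by blast
  have "polarization Q u v = (\<Sum>i\<in>UNIV. \<Sum>j\<in>UNIV. c i j * (u$i * v$j + v$i * u$j))" for u v
    unfolding polarization_def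
    by (simp add: c sum_subtractf[symmetric] sum.distrib[symmetric] algebra_simps)
  then show ?thesis by blast
qed

locale qf =
  fixes Q :: "'a::field ^ 'n \<Rightarrow> 'a"
  assumes quad: "is_quadratic_form Q"
  and nondeg: "nondegenerate Q"
  and char2: "(2::'a) \<noteq> 0"
begin

abbreviation b where "b \<equiv> polarization Q"

lemma b_sym: "b u v = b v u"
  unfolding polarization_def by (simp add: algebra_simps)

lemma b_add_right: "b u (v + w) = b u v + b u w"
proof -
  obtain c where c: "\<forall>u v. b u v = (\<Sum>i\<in>UNIV. \<Sum>j\<in>UNIV. c i j * (u$i * v$j + v$i * u$j))"
    using polar_formula[OF quad] by blast
  show ?thesis by (simp add: c sum.distrib[symmetric] algebra_simps)
qed

lemma b_scale_right: "b u (r *s v) = r * b u v"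
proof -
  obtain c where c: "\<forall>u v. b u v = (\<Sum>i\<in>UNIV. \<Sum>j\<in>UNIV. c i j * (u$i * v$j + v$i * u$j))"
    using polar_formula[OF quad] by blast
  show ?thesis by (simp add: c sum_distrib_left algebra_simps)
qed

lemma b_add_left: "b (v + w) u = b v u + b w u"
  using b_add_right b_sym by metis

lemma b_scale_left: "b (r *s v) u = r * b v u"
  using b_scale_right b_sym by metis

lemma b_zero_right[simp]: "b u 0 = 0"
  using b_scale_right[of u 0 0] by simp

lemma b_zero_left[simp]: "b 0 u = 0"
  using b_zero_right b_sym by metis

lemma b_neg_right: "b u (- v) = - b u v"
  using b_add_right[of u v "-v"] by (simp add: add_eq_0_iff2)

lemma b_neg_left: "b (- v) u = - b v u"
  using b_neg_right b_sym by metis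

lemma b_diff_right: "b u (v - w) = b u v - b u w"
  using b_add_right[of u v "-w"] b_neg_right by simp

lemma b_diff_left: "b (v - w) u = b v u - b w u"
  using b_diff_right b_sym by metis

lemma b_sum_right: "b u (sum f S) = (\<Sum>x\<in>S. b u (f x))"
  by (induction S rule: infinite_finite_induct) (auto simp: b_add_right)

lemma b_nondeg: "(\<And>v. b u v = 0) \<Longrightarrow> u = 0"
  using nondeg unfolding nondegenerate_def by blast

lemma orth_set_b: assumes "g \<in> orth_set Q" shows "b (g u) (g v) = b u v"
proof -
  have lin: "Vector_Spaces.linear (*s) (*s) g" and q: "\<And>v. Q (g v) = Q v"
    using assms unfolding orth_set_def GL_def by auto
  have "g (u + v) = g u + g v" using lin by (simp add: vec.linear_add)
  then show ?thesis unfolding polarization_def by (metis q)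
qed

definition orth :: "('a ^ 'n) set \<Rightarrow> ('a ^ 'n) set \<Rightarrow> bool" where
  "orth X Y \<longleftrightarrow> (\<forall>u\<in>X. \<forall>v\<in>Y. b u v = 0)"

definition nondegW :: "('a ^ 'n) set \<Rightarrow> bool" where
  "nondegW X \<longleftrightarrow> (\<forall>u\<in>X. (\<forall>v\<in>X. b u v = 0) \<longrightarrow> u = 0)"

lemma orth_sym: "orth X Y \<Longrightarrow> orth Y X"
  unfolding orth_def using b_sym by metis

lemma perp_subspace: "vec.subspace {v. \<forall>u\<in>X. b u v = 0}"
  unfolding vec.subspace_def by (auto simp: b_add_right b_scale_right)

lemma orth_span: assumes "orth X Y" shows "orth X (vec.span Y)"
proof -
  have "Y \<subseteq> {v. \<forall>u\<in>X. b u v = 0}" using assms unfolding orth_def by auto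
  then have "vec.span Y \<subseteq> {v. \<forall>u\<in>X. b u v = 0}"
    using perp_subspace vec.span_minimal by blast
  then show ?thesis unfolding orth_def by auto
qed

end

context qf begin

abbreviation OG where "OG \<equiv> orth_group Q"

lemma orth_set_lin: "g \<in> orth_set Q \<Longrightarrow> Vector_Spaces.linear (*s) (*s) g"
  unfolding orth_set_def GL_def by auto
lemma orth_set_bij: "g \<in> orth_set Q \<Longrightarrow> bij g"
  unfolding orth_set_def GL_def by auto
lemma orth_set_Q: "g \<in> orth_set Q \<Longrightarrow> Q (g v) = Q v"
  unfolding orth_set_def GL_def by auto

lemma group_O: "group OG"
proof (rule groupI)
  fix x y assume x: "x \<in> carrier OG" and y: "y \<in> carrier OG"
  then show "x \<otimes>\<^bsub>OG\<^esub> y \<in> carrier OG"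
    unfolding orth_group_def orth_set_def GL_def
    by (auto intro: Vector_Spaces.linear_compose bij_comp)
next
  show "\<one>\<^bsub>OG\<^esub> \<in> carrier OG"
    unfolding orth_group_def orth_set_def GL_def by (auto simp: vec.linear_id)
next
  fix x y z assume "x \<in> carrier OG" "y \<in> carrier OG" "z \<in> carrier OG"
  then show "x \<otimes>\<^bsub>OG\<^esub> y \<otimes>\<^bsub>OG\<^esub> z = x \<otimes>\<^bsub>OG\<^esub> (y \<otimes>\<^bsub>OG\<^esub> z)"
    unfolding orth_group_def by (simp add: comp_assoc)
next
  fix x assume "x \<in> carrier OG" then show "\<one>\<^bsub>OG\<^esub> \<otimes>\<^bsub>OG\<^esub> x = x"
    unfolding orth_group_def by simp
next
  fix x assume x: "x \<in> carrier OG"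
  then have xs: "x \<in> orth_set Q" unfolding orth_group_def by simp
  obtain y where ly: "Vector_Spaces.linear (*s) (*s) y" and yx: "y \<circ> x = id"
    using vec.linear_injective_left_inverse[OF orth_set_lin[OF xs]] orth_set_bij[OF xs]
    unfolding bij_def by blast
  have bx: "bij x" using orth_set_bij[OF xs] .
  have xy: "x \<circ> y = id"
  proof
    fix v
    obtain w where w: "v = x w" using bx unfolding bij_def surj_def by blast
    have "y (x w) = w" using yx by (metis comp_apply id_apply)
    then show "(x \<circ> y) v = id v" using w by simp
  qed
  have "bij y" using xy yx by (metis bij_betw_def comp_eq_id_dest inj_on_id o_bij)
  moreover have "Q (y v) = Q v" for v
    using orth_set_Q[OF xs, of "y v"] xy by (metis comp_apply id_apply)
  ultimately have "y \<in> carrier OG"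
    using ly unfolding orth_group_def orth_set_def GL_def by auto
  moreover have "y \<otimes>\<^bsub>OG\<^esub> x = \<one>\<^bsub>OG\<^esub>" using yx unfolding orth_group_def by simp
  ultimately show "\<exists>y\<in>carrier OG. y \<otimes>\<^bsub>OG\<^esub> x = \<one>\<^bsub>OG\<^esub>" by blast
qed

interpretation Og: group OG by (rule group_O)

definition ginv where "ginv g = inv\<^bsub>OG\<^esub> g"

lemma carrier_O: "carrier OG = orth_set Q" unfolding orth_group_def by simp
lemma mult_O: "x \<otimes>\<^bsub>OG\<^esub> y = x \<circ> y" unfolding orth_group_def by simp
lemma one_O: "\<one>\<^bsub>OG\<^esub> = id" unfolding orth_group_def by simp

lemma ginv_in: "g \<in> orth_set Q \<Longrightarrow> ginv g \<in> orth_set Q"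
  unfolding ginv_def using Og.inv_closed carrier_O by metis
lemma ginv_r: "g \<in> orth_set Q \<Longrightarrow> g (ginv g v) = v"
  unfolding ginv_def using Og.r_inv carrier_O mult_O one_O by (metis comp_apply id_apply)
lemma ginv_l: "g \<in> orth_set Q \<Longrightarrow> ginv g (g v) = v"
  unfolding ginv_def using Og.l_inv carrier_O mult_O one_O by (metis comp_apply id_apply)

lemma os_add: "g \<in> orth_set Q \<Longrightarrow> g (u + v) = g u + g v"
  using orth_set_lin vec.linear_add by blast
lemma os_scale: "g \<in> orth_set Q \<Longrightarrow> g (r *s v) = r *s g v"
  using orth_set_lin vec.linear_scale by blast
lemma os_diff: "g \<in> orth_set Q \<Longrightarrow> g (u - v) = g u - g v"
  using orth_set_lin vec.linear_diff by blast
lemma os_neg: "g \<in> orth_set Q \<Longrightarrow> g (- v) = - g v"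
  using orth_set_lin vec.linear_neg by blast
lemma os_zero: "g \<in> orth_set Q \<Longrightarrow> g 0 = 0"
  using orth_set_lin vec.linear_0 by blast
lemma os_inj: "g \<in> orth_set Q \<Longrightarrow> g u = g v \<Longrightarrow> u = v"
  using orth_set_bij bij_def inj_def by metis
lemma os_comp: "g \<in> orth_set Q \<Longrightarrow> h \<in> orth_set Q \<Longrightarrow> g \<circ> h \<in> orth_set Q"
  using Og.m_closed carrier_O mult_O by metis
lemma id_os: "id \<in> orth_set Q"
  using Og.one_closed carrier_O one_O by metis

lemma os_b_inv: "g \<in> orth_set Q \<Longrightarrow> b (g u) v = b u (ginv g v)"
  using orth_set_b[of g u "ginv g v"] ginv_r by metis

lemma derived_extract:
  fixes G H :: "('a ^ 'n \<Rightarrow> 'a ^ 'n) set" and Z :: "('a ^ 'n \<Rightarrow> 'a ^ 'n) set"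
  assumes subG: "subgroup G OG" and solv: "solvable (OG\<lparr>carrier := G\<rparr>)"
    and subH: "subgroup H OG" and HG: "H \<subseteq> G"
    and idZ: "id \<in> Z" and HZ: "\<not> H \<subseteq> Z"
  shows "\<exists>N. N \<subseteq> H \<and> subgroup N OG \<and> (\<forall>h\<in>H. \<forall>x\<in>N. h \<circ> x \<circ> ginv h \<in> N) \<and> \<not> N \<subseteq> Z
           \<and> (\<forall>x\<in>N. \<forall>y\<in>N. x \<circ> y \<circ> ginv x \<circ> ginv y \<in> Z)"
proof -
  define GG where "GG = OG\<lparr>carrier := G\<rparr>"
  define HH where "HH = OG\<lparr>carrier := H\<rparr>"
  have gGG: "group GG" unfolding GG_def using Og.subgroup_imp_group[OF subG] .
  have gHH: "group HH" unfolding HH_def using Og.subgroup_imp_group[OF subH] .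
  have HGG: "subgroup H GG" unfolding GG_def using Og.subgroup_incl[OF subH subG HG] .
  have HH_eq: "GG\<lparr>carrier := H\<rparr> = HH" unfolding GG_def HH_def by simp
  obtain n where n: "(derived GG ^^ n) H = {\<one>\<^bsub>GG\<^esub>}"
    using group.solvable_imp_trivial_derived_seq[OF gGG group.solvable_subgroup[OF gGG HGG]]
      solv unfolding GG_def by blast
  have sub_j: "(derived GG ^^ j) H \<subseteq> H" for j
  proof (induction j)
    case (Suc j) then show ?case using group.derived_incl[OF gGG _ HGG] by simp
  qed simp
  have cons: "(derived HH ^^ j) H = (derived GG ^^ j) H" for j
  proof (induction j)
    case (Suc j)
    then show ?case using group.derived_consistent[OF gGG sub_j[of j] HGG] HH_eq by simp
  qed simp
  define S where "S j = (derived HH ^^ j) (carrier HH)" for j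
  have carHH: "carrier HH = H" unfolding HH_def by simp
  have Snormal: "S j \<lhd> HH" for j
  proof (induction j)
    case 0 then show ?case unfolding S_def using group.normal_self[OF gHH] by simp
  next
    case (Suc j) then show ?case unfolding S_def using group.derived_is_normal[OF gHH] by simp
  qed
  have Sn: "S n \<subseteq> Z" using n cons idZ unfolding S_def carHH GG_def by (simp add: one_O)
  have ex: "\<exists>j. S j \<subseteq> Z" using Sn by blast
  define j where "j = (LEAST j. S j \<subseteq> Z)"
  have Sj: "S j \<subseteq> Z" unfolding j_def using LeastI_ex[OF ex] .
  have j0: "j \<noteq> 0" using Sj HZ unfolding S_def carHH by (auto)
  then obtain i where ji: "j = Suc i" using not0_implies_Suc by blast
  have Si: "\<not> S i \<subseteq> Z" using not_less_Least[of i "\<lambda>j. S j \<subseteq> Z"] ji unfolding j_def by simp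
  have Ni: "S i \<lhd> HH" by (rule Snormal)
  have subNHH: "subgroup (S i) HH" using group.normal_invE(1)[OF gHH Ni] .
  have NH: "S i \<subseteq> H" using subgroup.subset[OF subNHH] carHH by simp
  have subN: "subgroup (S i) OG"
    using subNHH unfolding HH_def using Og.incl_subgroup[OF subH] by blast
  have invHH: "x \<in> H \<Longrightarrow> inv\<^bsub>HH\<^esub> x = ginv x" for x
    unfolding HH_def ginv_def using Og.m_inv_consistent[OF subH] by simp
  have multHH: "x \<otimes>\<^bsub>HH\<^esub> y = x \<circ> y" for x y unfolding HH_def by (simp add: mult_O)
  have conj: "\<forall>h\<in>H. \<forall>x\<in>S i. h \<circ> x \<circ> ginv h \<in> S i"
    using group.normal_invE(2)[OF gHH Ni] invHH multHH carHH by metis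
  have comm: "\<forall>x\<in>S i. \<forall>y\<in>S i. x \<circ> y \<circ> ginv x \<circ> ginv y \<in> Z"
  proof (intro ballI)
    fix x y assume x: "x \<in> S i" and y: "y \<in> S i"
    have "x \<otimes>\<^bsub>HH\<^esub> y \<otimes>\<^bsub>HH\<^esub> inv\<^bsub>HH\<^esub> x \<otimes>\<^bsub>HH\<^esub> inv\<^bsub>HH\<^esub> y \<in> derived_set HH (S i)"
      using x y by blast
    then have "x \<otimes>\<^bsub>HH\<^esub> y \<otimes>\<^bsub>HH\<^esub> inv\<^bsub>HH\<^esub> x \<otimes>\<^bsub>HH\<^esub> inv\<^bsub>HH\<^esub> y \<in> S j"
      unfolding S_def ji derived_def by (simp add: generate.incl)
    moreover have "inv\<^bsub>HH\<^esub> x = ginv x" "inv\<^bsub>HH\<^esub> y = ginv y" using x y NH invHH by auto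
    ultimately show "x \<circ> y \<circ> ginv x \<circ> ginv y \<in> Z" using Sj multHH by auto
  qed
  show ?thesis using NH subN conj Si comm by blast
qed

end

abbreviation lin :: "('a::field ^ 'n \<Rightarrow> 'a ^ 'n) \<Rightarrow> bool" where
  "lin f \<equiv> Vector_Spaces.linear (*s) (*s) f"

lemma lin_funpow: "lin T \<Longrightarrow> lin (T ^^ m)"
  by (induction m) (auto intro: Vector_Spaces.linear_compose vec.linear_id simp: id_def[symmetric])

lemma funpow_add_apply: "(T ^^ (a + b)) x = (T ^^ a) ((T ^^ b) x)"
  by (simp add: funpow_add)

lemma funpow_inv: "T ` C \<subseteq> C \<Longrightarrow> x \<in> C \<Longrightarrow> (T ^^ m) x \<in> C"
  by (induction m) auto

lemma subspace_eq_dim: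
  assumes "vec.subspace S" "vec.subspace T" "S \<subseteq> T" "vec.dim T \<le> vec.dim S"
  shows "S = T"
  using vec.subspace_dim_equal assms by blast

lemma lin_image_eq:
  assumes "lin f" "vec.subspace C" "f ` C \<subseteq> C" "\<forall>x\<in>C. f x = 0 \<longrightarrow> x = 0"
  shows "f ` C = C"
proof -
  have inj: "inj_on f C" using vec.linear_inj_on_iff_eq_0[OF assms(1,2)] assms(4) by blast
  have sC: "vec.span C = C" using assms(2) by simp
  have "vec.dim (f ` C) = vec.dim C"
    using vec.dim_image_eq[OF assms(1), of C] inj sC by simp
  moreover have "vec.subspace (f ` C)" using vec.linear_subspace_image[OF assms(1,2)] .
  ultimately show ?thesis using subspace_eq_dim assms by (metis order_refl)
qed

lemma fitting:
  fixes T :: "'a::field ^ 'n \<Rightarrow> 'a ^ 'n"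
  assumes lT: "lin T" and C: "vec.subspace C" and TC: "T ` C \<subseteq> C" and m: "vec.dim C \<le> m"
  shows "\<forall>c\<in>C. \<exists>k r. k \<in> C \<and> (T ^^ m) k = 0 \<and> r \<in> (T ^^ m) ` C \<and> c = k + r"
    and "\<forall>c\<in>C. (T ^^ m) c = 0 \<longrightarrow> c \<in> (T ^^ m) ` C \<longrightarrow> c = 0"
proof -
  define ker where "ker j = {c\<in>C. (T ^^ j) c = 0}" for j
  have ksub: "vec.subspace (ker j)" for j
  proof -
    have "ker j = C \<inter> {c. (T ^^ j) c = 0}" unfolding ker_def by auto
    then show ?thesis
      using vec.subspace_inter C vec.linear_subspace_kernel[OF lin_funpow[OF lT]] by metis
  qed
  have kC: "ker j \<subseteq> C" for j unfolding ker_def by auto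
  have kmono: "ker j \<subseteq> ker (Suc j)" for j
  proof
    fix c assume "c \<in> ker j"
    then have "c \<in> C" "(T ^^ j) c = 0" unfolding ker_def by auto
    moreover have "(T ^^ Suc j) c = T ((T ^^ j) c)" by simp
    ultimately show "c \<in> ker (Suc j)" unfolding ker_def using vec.linear_0[OF lT] by simp
  qed
  have kmono': "i \<le> j \<Longrightarrow> ker i \<subseteq> ker j" for i j
    by (induction j) (auto simp: le_Suc_eq intro: kmono[THEN subsetD])
  have stable: "ker j = ker (Suc j) \<Longrightarrow> ker (j + k) = ker j" for j k
  proof (induction k)
    case (Suc k)
    have "ker (j + Suc k) \<subseteq> ker j"
    proof
      fix c assume c: "c \<in> ker (j + Suc k)"
      then have cC: "c \<in> C" and "(T ^^ (Suc j + k)) c = 0" unfolding ker_def by auto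
      then have "(T ^^ Suc j) ((T ^^ k) c) = 0" by (simp only: funpow_add_apply)
      moreover have "(T ^^ k) c \<in> C" using funpow_inv[OF TC cC] .
      ultimately have "(T ^^ k) c \<in> ker (Suc j)" unfolding ker_def by auto
      then have "(T ^^ k) c \<in> ker j" using Suc.prems by simp
      then have "(T ^^ (j + k)) c = 0" unfolding ker_def by (simp add: funpow_add_apply)
      then have "c \<in> ker (j + k)" using cC unfolding ker_def by auto
      then show "c \<in> ker j" using Suc by simp
    qed
    then show ?case using kmono'[of j "j + Suc k"] by auto
  qed simp
  have exj: "\<exists>j\<le>vec.dim C. ker j = ker (Suc j)"
  proof (rule ccontr)
    assume "\<not> ?thesis"
    then have ne: "\<forall>j\<le>vec.dim C. ker j \<subset> ker (Suc j)" using kmono by blast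
    have "j \<le> Suc (vec.dim C) \<Longrightarrow> j \<le> vec.dim (ker j)" for j
    proof (induction j)
      case (Suc j)
      then have "ker j \<subset> ker (Suc j)" using ne by simp
      then have "vec.dim (ker j) < vec.dim (ker (Suc j))"
        using vec.dim_psubset ksub by (metis vec.span_eq_iff)
      then show ?case using Suc by simp
    qed simp
    then have "Suc (vec.dim C) \<le> vec.dim (ker (Suc (vec.dim C)))" by simp
    moreover have "vec.dim (ker (Suc (vec.dim C))) \<le> vec.dim C" using vec.dim_subset[OF kC] .
    ultimately show False by simp
  qed
  then obtain j where j: "j \<le> vec.dim C" "ker j = ker (Suc j)" by blast
  have km: "ker m = ker j" using stable[OF j(2), of "m - j"] j(1) m by simp
  have k2m: "ker (m + m) = ker j" using stable[OF j(2), of "m + m - j"] j(1) m by simp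
  define P where "P = T ^^ m"
  have lP: "lin P" unfolding P_def using lin_funpow[OF lT] .
  have PC: "P ` C \<subseteq> C" unfolding P_def using funpow_inv[OF TC] by blast
  define R where "R = P ` C"
  have Rsub: "vec.subspace R" unfolding R_def using vec.linear_subspace_image[OF lP C] .
  have RC: "R \<subseteq> C" using PC R_def by simp
  have inter: "\<forall>c\<in>R. P c = 0 \<longrightarrow> c = 0"
  proof (intro ballI impI)
    fix c assume "c \<in> R" "P c = 0"
    then obtain c' where c': "c' \<in> C" "c = P c'" unfolding R_def by auto
    then have "(T ^^ (m + m)) c' = 0" using \<open>P c = 0\<close> unfolding P_def by (simp only: funpow_add_apply)
    then have "c' \<in> ker (m + m)" using c' unfolding ker_def by auto
    then have "c' \<in> ker m" using km k2m by simp
    then show "c = 0" using c' unfolding ker_def P_def by simp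
  qed
  then show "\<forall>c\<in>C. (T ^^ m) c = 0 \<longrightarrow> c \<in> (T ^^ m) ` C \<longrightarrow> c = 0"
    unfolding R_def P_def by auto
  have "P ` R \<subseteq> R" using PC unfolding R_def by (meson image_mono)
  then have PR: "P ` R = R"
    using lin_image_eq[OF lP Rsub] inter by auto
  show "\<forall>c\<in>C. \<exists>k r. k \<in> C \<and> (T ^^ m) k = 0 \<and> r \<in> (T ^^ m) ` C \<and> c = k + r"
  proof
    fix c assume c: "c \<in> C"
    have "P c \<in> P ` R" using PR c R_def by auto
    then obtain r where r: "r \<in> R" "P c = P r" by auto
    have "c - r \<in> C" using c r RC vec.subspace_diff C by blast
    moreover have "P (c - r) = 0" using r vec.linear_diff[OF lP] by simp
    ultimately show "\<exists>k r. k \<in> C \<and> (T ^^ m) k = 0 \<and> r \<in> (T ^^ m) ` C \<and> c = k + r"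
      using r unfolding P_def R_def by (metis diff_add_cancel)
  qed
qed

context qf begin

lemma alt_even:
  fixes a :: "'a ^ 'n \<Rightarrow> 'a ^ 'n \<Rightarrow> 'a" and W0 :: "('a ^ 'n) set"
  assumes addL: "\<And>u v w. a (u + v) w = a u w + a v w"
    and addR: "\<And>u v w. a u (v + w) = a u v + a u w"
    and scL: "\<And>r u v. a (r *s u) v = r * a u v"
    and scR: "\<And>r u v. a u (r *s v) = r * a u v"
    and alt: "\<And>u. u \<in> W0 \<Longrightarrow> a u u = 0"
  shows "vec.subspace W \<Longrightarrow> W \<subseteq> W0 \<Longrightarrow> (\<forall>u\<in>W. (\<forall>v\<in>W. a u v = 0) \<longrightarrow> u = 0) \<Longrightarrow> even (vec.dim W)"
proof (induction "vec.dim W" arbitrary: W rule: less_induct)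
  case less
  have zL: "a 0 v = 0" for v using scL[of 0 0 v] by simp
  have zR: "a u 0 = 0" for u using scR[of u 0 0] by simp
  have subR: "a x (y - z) = a x y - a x z" for x y z
  proof -
    have "y - z = y + (-1) *s z" by simp
    then show ?thesis using addR[of x y "(-1) *s z"] scR[where r="-1" and u=x and v=z] by simp
  qed
  have skew: "a u v = - a v u" if "u \<in> W" "v \<in> W" for u v
  proof -
    have "u + v \<in> W0" using that less.prems vec.subspace_add by blast
    then have "a (u + v) (u + v) = 0" using alt by blast
    moreover have "a u u = 0" "a v v = 0" using alt that less.prems by auto
    ultimately show ?thesis by (simp add: addL addR eq_neg_iff_add_eq_0 add.commute)
  qed
  show ?case
  proof (cases "W \<subseteq> {0}")
    case True
    then have "vec.dim W = 0" using vec.dim_eq_0 by blast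
    then show ?thesis by (metis even_zero)
  next
    case False
    then obtain u where u: "u \<in> W" "u \<noteq> 0" by blast
    then obtain v0 where v0: "v0 \<in> W" "a u v0 \<noteq> 0" using less.prems by blast
    define v where "v = inverse (a u v0) *s v0"
    have vW: "v \<in> W" unfolding v_def using v0 less.prems vec.subspace_scale by blast
    have uv: "a u v = 1" unfolding v_def using v0 by (simp add: scR)
    have vu: "a v u = -1" using skew[OF vW u(1)] uv by simp
    have uu: "a u u = 0" and vv: "a v v = 0" using alt u vW less.prems by auto
    define W' where "W' = {w\<in>W. a u w = 0 \<and> a v w = 0}"
    have W'sub: "vec.subspace W'"
      using less.prems(1) unfolding W'_def vec.subspace_def by (auto simp: addR scR zR)
    have W'W: "W' \<subseteq> W" unfolding W'_def by auto
    define P where "P = vec.span {u, v}"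
    have Psub: "vec.subspace P" unfolding P_def by simp
    have PW: "P \<subseteq> W" unfolding P_def by (rule vec.span_minimal) (use u vW less.prems in auto)
    have aperp: "\<forall>p\<in>P. a w p = 0" if "a w u = 0" "a w v = 0" for w
    proof -
      have "{u, v} \<subseteq> {p. a w p = 0}" using that by auto
      moreover have "vec.subspace {p. a w p = 0}"
        unfolding vec.subspace_def by (auto simp: zR addR scR)
      ultimately show ?thesis unfolding P_def using vec.span_minimal by blast
    qed
    have sum: "{x + y |x y. x \<in> P \<and> y \<in> W'} = W"
    proof
      show "{x + y |x y. x \<in> P \<and> y \<in> W'} \<subseteq> W"
        using PW W'W less.prems(1) vec.subspace_add by blast
      show "W \<subseteq> {x + y |x y. x \<in> P \<and> y \<in> W'}"
      proof
        fix w assume w: "w \<in> W"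
        define p where "p = a w v *s u - a w u *s v"
        have pP: "p \<in> P" unfolding p_def P_def
          by (intro vec.span_diff vec.span_scale vec.span_base) auto
        have pW: "p \<in> W" using pP PW by blast
        have "a u (w - p) = 0"
          unfolding p_def using skew[OF u(1) w] uu uv
          by (simp only: subR scR) simp
        moreover have "a v (w - p) = 0"
          unfolding p_def using skew[OF vW w] vu vv
          by (simp only: subR scR) simp
        moreover have "w - p \<in> W" using w pW less.prems(1) vec.subspace_diff by blast
        ultimately have "w - p \<in> W'" unfolding W'_def by simp
        then show "w \<in> {x + y |x y. x \<in> P \<and> y \<in> W'}" using pP by force
      qed
    qed
    have inter: "P \<inter> W' = {0}"
    proof
      show "P \<inter> W' \<subseteq> {0}"
      proof
        fix p assume p: "p \<in> P \<inter> W'"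
        then obtain \<alpha> where "p - \<alpha> *s u \<in> vec.span {v}"
          unfolding P_def using vec.span_insert[of u "{v}"] by auto
        then obtain \<beta> where "p - \<alpha> *s u = \<beta> *s v" using vec.span_singleton by auto
        then have pe: "p = \<alpha> *s u + \<beta> *s v" by (metis diff_add_cancel add.commute)
        have "a u p = \<beta>" using pe uu uv by (simp add: addR scR)
        moreover have "a v p = - \<alpha>" using pe vu vv by (simp add: addR scR)
        ultimately have "\<alpha> = 0" "\<beta> = 0" using p unfolding W'_def by auto
        then show "p \<in> {0}" using pe by simp
      qed
      show "{0} \<subseteq> P \<inter> W'" using Psub W'sub vec.subspace_0 by blast
    qed
    have dimP: "vec.dim P = 2"
    proof -
      have v0': "v \<noteq> 0" using uv zR by auto
      have "u \<notin> vec.span {v}"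
      proof
        assume "u \<in> vec.span {v}"
        then obtain k where "u = k *s v" using vec.span_singleton by auto
        then show False using uv vv by (simp add: scL)
      qed
      then show ?thesis unfolding P_def using vec.dim_insert[of u "{v}"] v0' by simp
    qed
    have dimW: "vec.dim W = 2 + vec.dim W'"
      using vec.dim_sums_Int[OF Psub W'sub] sum inter dimP by simp
    have lt: "vec.dim W' < vec.dim W" using dimW by simp
    have nd': "\<forall>w\<in>W'. (\<forall>x\<in>W'. a w x = 0) \<longrightarrow> w = 0"
    proof (intro ballI impI)
      fix w assume w: "w \<in> W'" and h: "\<forall>x\<in>W'. a w x = 0"
      have wW: "w \<in> W" using w W'W by blast
      have "a w u = 0" "a w v = 0" using w skew[OF wW u(1)] skew[OF wW vW] unfolding W'_def by auto
      then have hp: "\<forall>p\<in>P. a w p = 0" using aperp by blast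
      have "\<forall>x\<in>W. a w x = 0"
      proof
        fix x assume "x \<in> W"
        then obtain p y where "x = p + y" "p \<in> P" "y \<in> W'" using sum by blast
        then show "a w x = 0" using hp h by (simp add: addR)
      qed
      then show "w = 0" using less.prems(3) wW by blast
    qed
    have "even (vec.dim W')" using less.hyps[OF lt W'sub] W'W less.prems(2) nd' by blast
    then show ?thesis using dimW by simp
  qed
qed

lemma skew_even:
  assumes W: "vec.subspace W" and nd: "nondegW W" and ls: "lin s" and sW: "s ` W \<subseteq> W"
    and sk: "\<forall>u\<in>W. \<forall>v\<in>W. b (s u) v = - b u (s v)"
    and inj: "\<forall>w\<in>W. s w = 0 \<longrightarrow> w = 0"
  shows "even (vec.dim W)"
proof -
  define a where "a u v = b u (s v)" for u v
  have sWW: "s ` W = W" using lin_image_eq[OF ls W sW inj] .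
  have alt: "a u u = 0" if "u \<in> W" for u
  proof -
    have "b (s u) u = - b u (s u)" using sk that by blast
    then have e: "b u (s u) = - b u (s u)" using b_sym[of "s u" u] by simp
    have "b u (s u) + b u (s u) = 0" by (subst (2) e) simp
    then have "2 * b u (s u) = 0" by (metis mult_2)
    then show ?thesis unfolding a_def using char2 by (metis mult_eq_0_iff)
  qed
  have nd': "\<forall>u\<in>W. (\<forall>v\<in>W. a u v = 0) \<longrightarrow> u = 0"
  proof (intro ballI impI)
    fix u assume u: "u \<in> W" and h: "\<forall>v\<in>W. a u v = 0"
    have "\<forall>w\<in>W. b u w = 0"
    proof
      fix w assume "w \<in> W"
      then obtain v where "v \<in> W" "w = s v" using sWW by (metis imageE)
      then show "b u w = 0" using h unfolding a_def by blast
    qed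
    then show "u = 0" using nd u unfolding nondegW_def by blast
  qed
  show ?thesis
    apply (rule alt_even[of a W W])
    using alt nd' W
    by (auto simp: a_def b_add_left b_add_right b_scale_left b_scale_right
        vec.linear_add[OF ls] vec.linear_scale[OF ls])
qed

end

locale setting = qf Q for Q :: "'a::field ^ 'n \<Rightarrow> 'a" +
  fixes G :: "('a ^ 'n \<Rightarrow> 'a ^ 'n) set"
  assumes subG: "subgroup G (orth_group Q)"
    and finG: "finite G"
    and solvG: "solvable ((orth_group Q)\<lparr>carrier := G\<rparr>)"
    and irr: "acts_irreducibly G"
    and oddn: "odd CARD('n)"
begin

lemma G_os: "g \<in> G \<Longrightarrow> g \<in> orth_set Q"
  using subgroup.subset[OF subG] carrier_O by blast
lemma G_comp: "g \<in> G \<Longrightarrow> h \<in> G \<Longrightarrow> g \<circ> h \<in> G"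
  using subgroup.m_closed[OF subG] mult_O by metis
lemma G_inv: "g \<in> G \<Longrightarrow> ginv g \<in> G"
  using subgroup.m_inv_closed[OF subG] ginv_def by metis
lemma G_id: "id \<in> G"
  using subgroup.one_closed[OF subG] one_O by metis

lemma irrD: "vec.subspace U \<Longrightarrow> (\<forall>g\<in>G. g ` U \<subseteq> U) \<Longrightarrow> U = {0} \<or> U = UNIV"
  using irr unfolding acts_irreducibly_def by metis

lemma span_image_lin: "lin f \<Longrightarrow> vec.span (f ` S) = f ` vec.span S"
  using vec.linear_span_image by blast

lemma dim_image_os: assumes "g \<in> orth_set Q" "vec.subspace X" shows "vec.dim (g ` X) = vec.dim X"
proof -
  have "inj_on g (vec.span X)" using orth_set_bij[OF assms(1)] by (simp add: bij_def inj_on_def inj_def)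
  then show ?thesis using vec.dim_image_eq[OF orth_set_lin[OF assms(1)]] by blast
qed

lemma subspace_image_os: "g \<in> orth_set Q \<Longrightarrow> vec.subspace X \<Longrightarrow> vec.subspace (g ` X)"
  using vec.linear_subspace_image orth_set_lin by blast

lemma orth_image: "g \<in> orth_set Q \<Longrightarrow> orth A B \<Longrightarrow> orth (g ` A) (g ` B)"
  unfolding orth_def using orth_set_b by auto

lemma nonzero_image: "g \<in> orth_set Q \<Longrightarrow> A \<noteq> {0} \<Longrightarrow> vec.subspace A \<Longrightarrow> g ` A \<noteq> {0}"
proof -
  assume g: "g \<in> orth_set Q" and A: "A \<noteq> {0}" "vec.subspace A"
  then obtain a where a: "a \<in> A" "a \<noteq> 0" using vec.subspace_0 by blast
  then have "g a \<noteq> 0" using os_inj[OF g, of a 0] os_zero[OF g] by auto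
  then show "g ` A \<noteq> {0}" using a by blast
qed

definition osys :: "('a ^ 'n) set set \<Rightarrow> bool" where
  "osys D \<longleftrightarrow> (\<forall>X\<in>D. vec.subspace X \<and> X \<noteq> {0}) \<and> (\<forall>X\<in>D. \<forall>Y\<in>D. X \<noteq> Y \<longrightarrow> orth X Y)
     \<and> vec.span (\<Union>D) = UNIV \<and> (\<forall>g\<in>G. \<forall>X\<in>D. g ` X \<in> D)"

lemma osys_sub: "osys D \<Longrightarrow> X \<in> D \<Longrightarrow> vec.subspace X" unfolding osys_def by simp
lemma osys_ne: "osys D \<Longrightarrow> X \<in> D \<Longrightarrow> X \<noteq> {0}" unfolding osys_def by simp
lemma osys_orth: "osys D \<Longrightarrow> X \<in> D \<Longrightarrow> Y \<in> D \<Longrightarrow> X \<noteq> Y \<Longrightarrow> orth X Y" unfolding osys_def by simp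
lemma osys_span: "osys D \<Longrightarrow> vec.span (\<Union>D) = UNIV" unfolding osys_def by simp
lemma osys_inv: "osys D \<Longrightarrow> g \<in> G \<Longrightarrow> X \<in> D \<Longrightarrow> g ` X \<in> D" unfolding osys_def by simp

lemma osys_nondeg:
  assumes D: "osys D" and X: "X \<in> D" shows "nondegW X"
  unfolding nondegW_def
proof (intro ballI impI)
  fix u assume u: "u \<in> X" and h: "\<forall>v\<in>X. b u v = 0"
  have "\<Union>D \<subseteq> {v. \<forall>u'\<in>{u}. b u' v = 0}"
  proof
    fix v assume "v \<in> \<Union>D"
    then obtain Y where Y: "Y \<in> D" "v \<in> Y" by blast
    show "v \<in> {v. \<forall>u'\<in>{u}. b u' v = 0}"
    proof (cases "Y = X")
      case True then show ?thesis using h Y by auto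
    next
      case False then have "orth X Y" using D X Y unfolding osys_def by blast
      then show ?thesis using u Y unfolding orth_def by auto
    qed
  qed
  then have "vec.span (\<Union>D) \<subseteq> {v. \<forall>u'\<in>{u}. b u' v = 0}"
    using vec.span_minimal perp_subspace by blast
  then have "\<And>v. b u v = 0" using D unfolding osys_def by auto
  then show "u = 0" using b_nondeg by blast
qed

lemma orth_nondeg_inter:
  assumes "nondegW X" "orth X T" "v \<in> X" "v \<in> T" shows "v = 0"
  using assms unfolding nondegW_def orth_def using b_sym by metis

lemma span_sum_rep:
  assumes "finite E" "\<forall>X\<in>E. vec.subspace X"
  shows "vec.span (\<Union>E) = {sum f E | f. \<forall>X\<in>E. f X \<in> X}"
  using assms
proof (induction E rule: finite_induct)
  case empty then show ?case by simp
next
  case (insert X E)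
  have sX: "vec.span X = X" using insert.prems by simp
  have "vec.span (\<Union>(insert X E)) = vec.span (X \<union> \<Union>E)" by simp
  also have "\<dots> = {x + y |x y. x \<in> X \<and> y \<in> vec.span (\<Union>E)}" by (simp only: vec.span_Un sX)
  also have "\<dots> = {sum f (insert X E) | f. \<forall>Y\<in>insert X E. f Y \<in> Y}"
  proof
    show "{x + y |x y. x \<in> X \<and> y \<in> vec.span (\<Union>E)} \<subseteq> {sum f (insert X E) |f. \<forall>Y\<in>insert X E. f Y \<in> Y}"
    proof
      fix v assume "v \<in> {x + y |x y. x \<in> X \<and> y \<in> vec.span (\<Union>E)}"
      then obtain x y where xy: "v = x + y" "x \<in> X" "y \<in> vec.span (\<Union>E)" by blast
      then obtain f where f: "y = sum f E" "\<forall>Y\<in>E. f Y \<in> Y" using insert by auto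
      define f' where "f' = f(X := x)"
      have "sum f' E = sum f E" unfolding f'_def using insert.hyps(2) by (intro sum.cong) auto
      then have "v = sum f' (insert X E)" using xy f insert.hyps unfolding f'_def by simp
      moreover have "\<forall>Y\<in>insert X E. f' Y \<in> Y" using f xy unfolding f'_def by auto
      ultimately show "v \<in> {sum f (insert X E) |f. \<forall>Y\<in>insert X E. f Y \<in> Y}" by blast
    qed
    show "{sum f (insert X E) |f. \<forall>Y\<in>insert X E. f Y \<in> Y} \<subseteq> {x + y |x y. x \<in> X \<and> y \<in> vec.span (\<Union>E)}"
    proof
      fix v assume "v \<in> {sum f (insert X E) |f. \<forall>Y\<in>insert X E. f Y \<in> Y}"
      then obtain f where f: "v = sum f (insert X E)" "\<forall>Y\<in>insert X E. f Y \<in> Y" by blast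
      then have "v = f X + sum f E" using insert.hyps by simp
      moreover have "sum f E \<in> vec.span (\<Union>E)" using insert f by auto
      ultimately show "v \<in> {x + y |x y. x \<in> X \<and> y \<in> vec.span (\<Union>E)}" using f by blast
    qed
  qed
  finally show ?case .
qed

lemma dim_span_orth:
  assumes "finite E" "\<forall>X\<in>E. vec.subspace X \<and> nondegW X" "\<forall>X\<in>E. \<forall>Y\<in>E. X \<noteq> Y \<longrightarrow> orth X Y"
  shows "vec.dim (vec.span (\<Union>E)) = (\<Sum>X\<in>E. vec.dim X)"
  using assms
proof (induction E rule: finite_induct)
  case empty then show ?case by simp
next
  case (insert X E)
  have sX: "vec.subspace X" "nondegW X" using insert.prems by auto
  define T where "T = vec.span (\<Union>E)"
  have sT: "vec.subspace T" unfolding T_def by simp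
  have "\<forall>Y\<in>E. orth X Y" using insert.prems(2) insert.hyps(2) by auto
  then have "orth X (\<Union>E)" unfolding orth_def by fast
  then have oT: "orth X T" unfolding T_def using orth_span by blast
  have inter: "X \<inter> T = {0}"
    using orth_nondeg_inter[OF sX(2) oT] sX(1) sT vec.subspace_0 by blast
  have spX: "vec.span X = X" using sX(1) by simp
  have "vec.span (\<Union>(insert X E)) = {x + y |x y. x \<in> X \<and> y \<in> T}"
    unfolding T_def by (simp only: Union_insert vec.span_Un spX)
  then have "vec.dim (vec.span (\<Union>(insert X E))) = vec.dim X + vec.dim T"
    using vec.dim_sums_Int[OF sX(1) sT] inter by simp
  also have "vec.dim T = (\<Sum>X\<in>E. vec.dim X)" using insert unfolding T_def by auto
  finally show ?case using insert.hyps by simp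
qed

lemma dim_UNIV_n: "vec.dim (UNIV :: ('a ^ 'n) set) = CARD('n)"
  using vec.dim_UNIV card_cart_basis by metis

lemma osys_finite:
  assumes D: "osys D" shows "finite D" "card D \<le> CARD('n)"
proof -
  have le: "card E \<le> CARD('n)" if E: "E \<subseteq> D" "finite E" for E
  proof -
    have pr: "\<forall>X\<in>E. vec.subspace X \<and> nondegW X" "\<forall>X\<in>E. \<forall>Y\<in>E. X \<noteq> Y \<longrightarrow> orth X Y"
      using osys_sub[OF D] osys_nondeg[OF D] osys_orth[OF D] E(1) by (auto simp: subset_iff)
    have "card E = (\<Sum>X\<in>E. 1)" by simp
    also have "\<dots> \<le> (\<Sum>X\<in>E. vec.dim X)"
    proof (rule sum_mono)
      fix X assume "X \<in> E"
      then have "X \<noteq> {0}" "vec.subspace X" using osys_sub[OF D] osys_ne[OF D] E by auto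
      then have "vec.dim X \<noteq> 0" using vec.dim_eq_0 vec.subspace_0 by blast
      then show "1 \<le> vec.dim X" by linarith
    qed
    also have "\<dots> = vec.dim (vec.span (\<Union>E))" using dim_span_orth[OF E(2) pr] by simp
    also have "\<dots> \<le> CARD('n)" using vec.dim_subset[of _ UNIV] dim_UNIV_n by (metis subset_UNIV)
    finally show ?thesis .
  qed
  show "finite D"
  proof (rule ccontr)
    assume "infinite D"
    then obtain E where E: "E \<subseteq> D" "finite E" "card E = Suc CARD('n)"
      using infinite_arbitrarily_large by blast
    have "card E \<le> CARD('n)" by (rule le[OF E(1,2)])
    then show False using E(3) by simp
  qed
  then show "card D \<le> CARD('n)" using le[of D] by simp
qed

lemma osys_UNIV: "osys {UNIV}"
proof -
  obtain i :: 'n where True by blast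
  have "axis i (1::'a) \<noteq> 0" by (simp add: axis_def vec_eq_iff)
  then have "UNIV \<noteq> ({0} :: ('a ^ 'n) set)" by blast
  moreover have "g ` UNIV = UNIV" if "g \<in> G" for g
    using orth_set_bij[OF G_os[OF that]] by (simp add: bij_def)
  ultimately show ?thesis unfolding osys_def by auto
qed

lemma G_inv_span: "(\<forall>g\<in>G. g ` S \<subseteq> S) \<Longrightarrow> g \<in> G \<Longrightarrow> g ` vec.span S \<subseteq> vec.span S"
  using span_image_lin[OF orth_set_lin[OF G_os]] vec.span_mono by metis

lemma osys_trans:
  assumes D: "osys D" and X: "X \<in> D" and Y: "Y \<in> D" shows "\<exists>g\<in>G. g ` X = Y"
proof (rule ccontr)
  assume nt: "\<not> ?thesis"
  define S where "S = vec.span (\<Union>g\<in>G. g ` X)"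
  have "\<forall>h\<in>G. h ` (\<Union>g\<in>G. g ` X) \<subseteq> (\<Union>g\<in>G. g ` X)"
  proof (intro ballI subsetI)
    fix h v assume h: "h \<in> G" and "v \<in> h ` (\<Union>g\<in>G. g ` X)"
    then obtain g x where "g \<in> G" "x \<in> X" "v = h (g x)" by blast
    then show "v \<in> (\<Union>g\<in>G. g ` X)" using G_comp[OF h] by (metis UN_iff comp_apply image_eqI)
  qed
  then have "\<forall>h\<in>G. h ` S \<subseteq> S" unfolding S_def using G_inv_span[of "\<Union>g\<in>G. g ` X"] by blast
  then have "S = {0} \<or> S = UNIV" using irrD unfolding S_def by simp
  moreover have "X \<subseteq> S" unfolding S_def using G_id vec.span_superset by fastforce
  moreover have "X \<noteq> {0}" "vec.subspace X" using osys_sub[OF D X] osys_ne[OF D X] by auto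
  ultimately have SU: "S = UNIV" using vec.subspace_0 by blast
  have "orth Y (\<Union>g\<in>G. g ` X)"
    unfolding orth_def
  proof (intro ballI)
    fix u v assume u: "u \<in> Y" and v: "v \<in> (\<Union>g\<in>G. g ` X)"
    then obtain g where g: "g \<in> G" "v \<in> g ` X" by blast
    have "g ` X \<in> D" "g ` X \<noteq> Y" using osys_inv[OF D g(1) X] g nt by auto
    then have "orth Y (g ` X)" using osys_orth[OF D Y] by metis
    then show "b u v = 0" using g u unfolding orth_def by blast
  qed
  then have "orth Y S" unfolding S_def using orth_span by blast
  then have "\<forall>u\<in>Y. u = 0" unfolding orth_def SU using b_nondeg by blast
  then show False using osys_ne[OF D Y] osys_sub[OF D Y] vec.subspace_0 by blast
qed

lemma osys_card_dim:
  assumes D: "osys D" and X: "X \<in> D" shows "CARD('n) = card D * vec.dim X"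
proof -
  have pr: "\<forall>X\<in>D. vec.subspace X \<and> nondegW X" "\<forall>X\<in>D. \<forall>Y\<in>D. X \<noteq> Y \<longrightarrow> orth X Y"
    using osys_sub[OF D] osys_nondeg[OF D] osys_orth[OF D] by auto
  have eq: "vec.dim Y = vec.dim X" if Y: "Y \<in> D" for Y
  proof -
    obtain g where "g \<in> G" "g ` X = Y" using osys_trans[OF D X Y] by blast
    then show ?thesis using dim_image_os G_os pr X by blast
  qed
  have "CARD('n) = vec.dim (vec.span (\<Union>D))" using osys_span[OF D] dim_UNIV_n by simp
  also have "\<dots> = (\<Sum>Y\<in>D. vec.dim Y)" using dim_span_orth[OF osys_finite(1)[OF D] pr] .
  also have "\<dots> = card D * vec.dim X" using eq by simp
  finally show ?thesis .
qed

lemma osys_common: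
  assumes D: "osys D" "Y \<in> D" "Y' \<in> D" "v \<in> Y" "v \<in> Y'" "v \<noteq> 0" shows "Y = Y'"
proof (rule ccontr)
  assume "Y \<noteq> Y'"
  then have "orth Y Y'" using osys_orth D by blast
  then show False using orth_nondeg_inter[OF osys_nondeg[OF D(1,2)]] D by blast
qed

end

context setting begin

interpretation Og: group OG by (rule group_O)

definition cj :: "('a ^ 'n \<Rightarrow> 'a ^ 'n) \<Rightarrow> ('a ^ 'n \<Rightarrow> 'a ^ 'n) \<Rightarrow> ('a ^ 'n \<Rightarrow> 'a ^ 'n)" where
  "cj h f = h \<circ> f \<circ> ginv h"

lemma ginv_comp: "g \<in> orth_set Q \<Longrightarrow> h \<in> orth_set Q \<Longrightarrow> ginv (g \<circ> h) = ginv h \<circ> ginv g"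
  unfolding ginv_def using Og.inv_mult_group carrier_O mult_O by metis

lemma ginv_ginv: "g \<in> orth_set Q \<Longrightarrow> ginv (ginv g) = g"
  unfolding ginv_def using Og.inv_inv carrier_O by metis

lemma ginv_id: "ginv id = id"
  unfolding ginv_def using Og.inv_one one_O by metis

lemma cj_cj: "g \<in> orth_set Q \<Longrightarrow> h \<in> orth_set Q \<Longrightarrow> cj g (cj h f) = cj (g \<circ> h) f"
  unfolding cj_def using ginv_comp by (simp add: comp_assoc)

lemma cj_id: "cj id f = f" unfolding cj_def ginv_id by simp

lemma cj_inv_cj: "h \<in> orth_set Q \<Longrightarrow> cj (ginv h) (cj h f) = f"
proof -
  assume h: "h \<in> orth_set Q"
  have "ginv h \<circ> h = id" using ginv_l[OF h] by (simp add: fun_eq_iff)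
  then show ?thesis using cj_cj[OF ginv_in[OF h] h] cj_id by metis
qed

lemma cj_funpow: "h \<in> orth_set Q \<Longrightarrow> (cj h f ^^ m) v = h ((f ^^ m) (ginv h v))"
  by (induction m arbitrary: v) (auto simp: cj_def ginv_r ginv_l)

end

locale prim = setting Q G for Q :: "'a::field ^ 'n \<Rightarrow> 'a" and G +
  fixes W :: "('a ^ 'n) set" and H :: "('a ^ 'n \<Rightarrow> 'a ^ 'n) set"
  assumes W: "vec.subspace W" and ndW: "nondegW W" and oddW: "odd (vec.dim W)"
    and dimW: "vec.dim W \<noteq> 1"
    and subH: "subgroup H (orth_group Q)" and HG: "H \<subseteq> G"
    and HW: "\<forall>h\<in>H. h ` W = W"
    and irrH: "\<And>U. vec.subspace U \<Longrightarrow> U \<subseteq> W \<Longrightarrow> (\<forall>h\<in>H. h ` U \<subseteq> U) \<Longrightarrow> U = {0} \<or> U = W"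
begin

abbreviation d where "d \<equiv> vec.dim W"

lemma H_os: "h \<in> H \<Longrightarrow> h \<in> orth_set Q" using HG G_os by blast
lemma H_inv: "h \<in> H \<Longrightarrow> ginv h \<in> H"
  using subgroup.m_inv_closed[OF subH] ginv_def by metis
lemma H_comp: "g \<in> H \<Longrightarrow> h \<in> H \<Longrightarrow> g \<circ> h \<in> H"
  using subgroup.m_closed[OF subH] mult_O by metis
lemma H_id: "id \<in> H"
  using subgroup.one_closed[OF subH] one_O by metis
lemma H_W: "h \<in> H \<Longrightarrow> w \<in> W \<Longrightarrow> h w \<in> W" using HW by blast
lemma H_cjW: "h \<in> H \<Longrightarrow> f ` W \<subseteq> W \<Longrightarrow> w \<in> W \<Longrightarrow> cj h f w \<in> W"
  unfolding cj_def comp_apply by (metis H_W H_inv image_subset_iff)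

lemma W0: "0 \<in> W" using W vec.subspace_0 by blast
lemma Wne: "W \<noteq> {0}"
proof
  assume "W = {0}" then have "d = 0" by simp
  then show False using oddW by (metis even_zero)
qed
lemma d_pos: "d \<ge> 1" using oddW by (cases d) auto

lemma lin_cj: "h \<in> orth_set Q \<Longrightarrow> lin f \<Longrightarrow> lin (cj h f)"
  unfolding cj_def using orth_set_lin ginv_in by (metis Vector_Spaces.linear_compose)

lemma cj_comm_lift:
  assumes fW: "f ` W \<subseteq> W"
    and base: "\<forall>h\<in>H. \<forall>w\<in>W. f (cj h f w) = cj h f (f w)"
    and h1: "h1 \<in> H" and h2: "h2 \<in> H" and w: "w \<in> W"
  shows "cj h1 f (cj h2 f w) = cj h2 f (cj h1 f w)"
proof -
  define k where "k = ginv h1 \<circ> h2"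
  have kH: "k \<in> H" unfolding k_def using H_comp H_inv h1 h2 by blast
  have o1: "h1 \<in> orth_set Q" and o2: "h2 \<in> orth_set Q" using h1 h2 H_os by auto
  have cjk: "cj h2 f = cj h1 (cj k f)"
    unfolding k_def using cj_cj[OF o1 os_comp[OF ginv_in[OF o1] o2]]
    by (metis comp_assoc cj_cj cj_inv_cj ginv_in o1 o2 ginv_ginv)
  define w' where "w' = ginv h1 w"
  have w': "w' \<in> W" unfolding w'_def using H_W H_inv h1 w by blast
  have "cj h1 f (cj h2 f w) = h1 (f (cj k f w'))"
    unfolding cjk by (simp add: cj_def w'_def ginv_l[OF o1])
  also have "\<dots> = h1 (cj k f (f w'))" using base kH w' by simp
  also have "\<dots> = cj h2 f (cj h1 f w)"
    unfolding cjk by (simp add: cj_def w'_def ginv_l[OF o1])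
  finally show ?thesis .
qed

end

definition (in qf) primconcl :: "('a ^ 'n) set \<Rightarrow> ('a ^ 'n \<Rightarrow> 'a ^ 'n) set \<Rightarrow> ('a ^ 'n) set set \<Rightarrow> bool" where
  "primconcl W H DD \<longleftrightarrow> (\<forall>A\<in>DD. vec.subspace A \<and> A \<noteq> {0} \<and> A \<subseteq> W)
      \<and> (\<forall>A\<in>DD. \<forall>B\<in>DD. A \<noteq> B \<longrightarrow> orth A B) \<and> vec.span (\<Union>DD) = W
      \<and> (\<forall>h\<in>H. \<forall>A\<in>DD. h ` A \<in> DD) \<and> (\<exists>A\<in>DD. \<exists>B\<in>DD. A \<noteq> B)"

locale fam = prim Q G W H for Q :: "'a::field ^ 'n \<Rightarrow> 'a" and G W H +
  fixes T0 :: "'a ^ 'n \<Rightarrow> 'a ^ 'n" and e :: 'a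
  assumes lT0: "lin T0" and T0W: "T0 ` W \<subseteq> W" and e: "e * e = 1"
    and adj: "\<forall>u\<in>W. \<forall>v\<in>W. b (T0 u) v = e * b u (T0 v)"
    and base: "\<forall>h\<in>H. \<forall>w\<in>W. T0 (cj h T0 w) = cj h T0 (T0 w)"
begin

definition Ts where "Ts = (\<lambda>h. cj h T0) ` H"

lemma Ts_lin: "T \<in> Ts \<Longrightarrow> lin T"
  unfolding Ts_def using lin_cj[OF H_os lT0] by blast
lemma Ts_W: "T \<in> Ts \<Longrightarrow> w \<in> W \<Longrightarrow> T w \<in> W"
  unfolding Ts_def using H_cjW[OF _ T0W] by blast
lemma Ts_comm: assumes "T \<in> Ts" "T' \<in> Ts" "w \<in> W" shows "T (T' w) = T' (T w)"
proof -
  obtain h h' where "h \<in> H" "h' \<in> H" "T = cj h T0" "T' = cj h' T0" using assms(1,2) unfolding Ts_def by blast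
  then show ?thesis using cj_comm_lift[OF T0W base, of h h' w] assms(3) by simp
qed
lemma Ts_adj: assumes T: "T \<in> Ts" and u: "u \<in> W" and v: "v \<in> W" shows "b (T u) v = e * b u (T v)"
proof -
  obtain h where h: "h \<in> H" "T = cj h T0" using T unfolding Ts_def by blast
  have o: "h \<in> orth_set Q" using H_os h by blast
  have u': "ginv h u \<in> W" and v': "ginv h v \<in> W" using H_W H_inv h u v by auto
  have "b (T u) v = b (T0 (ginv h u)) (ginv h v)" unfolding h cj_def using os_b_inv[OF o] by simp
  also have "\<dots> = e * b (ginv h u) (T0 (ginv h v))" using adj u' v' by blast
  also have "\<dots> = e * b (h (ginv h u)) (h (T0 (ginv h v)))" using orth_set_b[OF o] by simp
  also have "\<dots> = e * b u (T v)" unfolding h cj_def using ginv_r[OF o] by simp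
  finally show ?thesis .
qed
lemma Ts_conj: assumes h: "h \<in> H" and T: "T \<in> Ts" shows "cj h T \<in> Ts"
proof -
  obtain h' where h': "h' \<in> H" "T = cj h' T0" using T unfolding Ts_def by blast
  have "cj h T = cj (h \<circ> h') T0" unfolding h'(2) using cj_cj[OF H_os[OF h] H_os[OF h'(1)]] .
  moreover have "h \<circ> h' \<in> H" using H_comp h h' by blast
  ultimately show ?thesis unfolding Ts_def by blast
qed
lemma Ts_decomp: assumes "h \<in> H" "T \<in> Ts" shows "T = cj h (cj (ginv h) T)" "cj (ginv h) T \<in> Ts"
proof -
  have o: "h \<in> orth_set Q" using H_os assms by blast
  show "T = cj h (cj (ginv h) T)" using cj_inv_cj[OF ginv_in[OF o]] ginv_ginv[OF o] by metis
  show "cj (ginv h) T \<in> Ts" using Ts_conj H_inv assms by blast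
qed
lemma T0_Ts: "T0 \<in> Ts" unfolding Ts_def using H_id cj_id[of T0] by (metis image_eqI)
lemma Ts_fin: "finite Ts" unfolding Ts_def using finite_subset[OF HG finG] by simp

lemma Ts_powW: "T \<in> Ts \<Longrightarrow> w \<in> W \<Longrightarrow> (T ^^ m) w \<in> W"
  by (induction m) (auto simp: Ts_W)

lemma Ts_pow_comm: "T \<in> Ts \<Longrightarrow> T' \<in> Ts \<Longrightarrow> w \<in> W \<Longrightarrow> T' ((T ^^ m) w) = (T ^^ m) (T' w)"
proof (induction m)
  case (Suc m)
  have "T' ((T ^^ Suc m) w) = T' (T ((T ^^ m) w))" by simp
  also have "\<dots> = T (T' ((T ^^ m) w))" using Ts_comm Suc.prems Ts_powW by metis
  also have "\<dots> = (T ^^ Suc m) (T' w)" using Suc by simp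
  finally show ?case .
qed simp

lemma Ts_adj': "T \<in> Ts \<Longrightarrow> u \<in> W \<Longrightarrow> v \<in> W \<Longrightarrow> b u (T v) = e * b (T u) v"
proof -
  assume a: "T \<in> Ts" "u \<in> W" "v \<in> W"
  have "e * b (T u) v = e * (e * b u (T v))" using Ts_adj[OF a] by simp
  also have "\<dots> = b u (T v)" using e by (simp add: mult.assoc[symmetric])
  finally show ?thesis by simp
qed

lemma Ts_pow_adj: "T \<in> Ts \<Longrightarrow> u \<in> W \<Longrightarrow> v \<in> W \<Longrightarrow> b u ((T ^^ m) v) = e ^ m * b ((T ^^ m) u) v"
proof (induction m arbitrary: u)
  case (Suc m)
  have "b u ((T ^^ Suc m) v) = b u (T ((T ^^ m) v))" by simp
  also have "\<dots> = e * b (T u) ((T ^^ m) v)" using Ts_adj' Suc.prems Ts_powW by blast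
  also have "\<dots> = e * (e ^ m * b ((T ^^ m) (T u)) v)" using Suc.IH[of "T u"] Suc.prems Ts_W by simp
  also have "\<dots> = e ^ Suc m * b ((T ^^ Suc m) u) v" by (simp add: funpow_Suc_right del: funpow.simps)
  finally show ?case .
qed simp

lemma Ts_pow0: "T \<in> Ts \<Longrightarrow> (T ^^ m) 0 = 0"
  using vec.linear_0[OF lin_funpow[OF Ts_lin]] by blast

lemma find_ker:
  assumes T: "T \<in> Ts" and C: "T ` C \<subseteq> C"
  shows "c \<in> C \<Longrightarrow> c \<noteq> 0 \<Longrightarrow> (T ^^ m) c = 0 \<Longrightarrow> \<exists>c'\<in>C. c' \<noteq> 0 \<and> T c' = 0"
proof (induction m arbitrary: c)
  case 0 then show ?case by simp
next
  case (Suc m)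
  show ?case
  proof (cases "T c = 0")
    case True then show ?thesis using Suc by blast
  next
    case False
    have "(T ^^ m) (T c) = 0" using Suc.prems by (simp add: funpow_Suc_right del: funpow.simps)
    moreover have "T c \<in> C" using C Suc.prems by blast
    ultimately show ?thesis using Suc.IH False by blast
  qed
qed

lemma unip:
  assumes nil: "\<forall>w\<in>W. (T0 ^^ d) w = 0"
  shows "\<forall>w\<in>W. T0 w = 0"
proof -
  define CS where "CS S = {w\<in>W. \<forall>T\<in>S. T w = 0}" for S :: "('a ^ 'n \<Rightarrow> 'a ^ 'n) set"
  have nilT: "(T ^^ d) w = 0" if TT: "T \<in> Ts" and ww: "w \<in> W" for T w
  proof -
    obtain h where h: "h \<in> H" "T = cj h T0" using TT unfolding Ts_def by blast
    have o: "h \<in> orth_set Q" using H_os h by blast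
    have "(T ^^ d) w = h ((T0 ^^ d) (ginv h w))" unfolding h using cj_funpow[OF o] .
    also have "\<dots> = 0" using nil H_W H_inv h ww os_zero[OF o] by simp
    finally show ?thesis .
  qed
  have CSsub: "vec.subspace (CS S)" if S: "S \<subseteq> Ts" for S
  proof -
    have L: "T (x + y) = T x + T y" "T (c *s x) = c *s T x" "T 0 = 0" if TS: "T \<in> S" for T x y c
    proof -
      have lT: "lin T" using Ts_lin S TS by blast
      show "T (x + y) = T x + T y" "T (c *s x) = c *s T x" "T 0 = 0"
        using vec.linear_add[OF lT] vec.linear_scale[OF lT] vec.linear_0[OF lT] by auto
    qed
    show ?thesis unfolding vec.subspace_def CS_def
      using W0 vec.subspace_add[OF W] vec.subspace_scale[OF W] by (auto simp: L)
  qed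
  have CSinv: "T ` CS S \<subseteq> CS S" if "S \<subseteq> Ts" "T \<in> Ts" for S T
  proof
    fix v assume "v \<in> T ` CS S"
    then obtain w where w: "w \<in> CS S" "v = T w" by blast
    have "T' (T w) = 0" if T'S: "T' \<in> S" for T'
    proof -
      have T'T: "T' \<in> Ts" using T'S \<open>S \<subseteq> Ts\<close> by blast
      have wW: "w \<in> W" and w0: "T' w = 0" using w T'S unfolding CS_def by auto
      have "T' (T w) = T (T' w)" using Ts_comm[OF T'T \<open>T \<in> Ts\<close> wW] .
      then show ?thesis using w0 vec.linear_0[OF Ts_lin[OF \<open>T \<in> Ts\<close>]] by simp
    qed
    then show "v \<in> CS S" using w Ts_W[OF \<open>T \<in> Ts\<close>] unfolding CS_def by auto
  qed
  have ne: "S \<subseteq> Ts \<Longrightarrow> CS S \<noteq> {0}" for S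
  proof (induction S rule: infinite_finite_induct)
    case (infinite S) then show ?case using finite_subset[OF _ Ts_fin] by blast
  next
    case empty then show ?case unfolding CS_def using Wne by simp
  next
    case (insert T S)
    then have ST: "S \<subseteq> Ts" "T \<in> Ts" by auto
    have "CS S \<noteq> {0}" using insert ST by blast
    then obtain c where c: "c \<in> CS S" "c \<noteq> 0" using vec.subspace_0[OF CSsub[OF ST(1)]] by blast
    have "(T ^^ d) c = 0" using nilT ST c unfolding CS_def by blast
    then obtain c' where c': "c' \<in> CS S" "c' \<noteq> 0" "T c' = 0"
      using find_ker[OF ST(2) CSinv[OF ST]] c by blast
    then have "c' \<in> CS (insert T S)" unfolding CS_def by auto
    then show ?case using c' by blast
  qed
  have Hinv: "\<forall>h\<in>H. h ` CS Ts \<subseteq> CS Ts"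
  proof (intro ballI subsetI)
    fix h v assume h: "h \<in> H" and "v \<in> h ` CS Ts"
    then obtain w where w: "w \<in> CS Ts" "v = h w" by blast
    have o: "h \<in> orth_set Q" using H_os h by blast
    have "T (h w) = 0" if "T \<in> Ts" for T
    proof -
      have "T (h w) = cj h (cj (ginv h) T) (h w)" using Ts_decomp(1)[OF h that] by metis
      also have "\<dots> = h (cj (ginv h) T w)" unfolding cj_def using ginv_l[OF o] by simp
      also have "cj (ginv h) T w = 0" using w(1) Ts_decomp(2)[OF h that] unfolding CS_def by blast
      then have "h (cj (ginv h) T w) = 0" using os_zero[OF o] by simp
      finally show ?thesis .
    qed
    then show "v \<in> CS Ts" using w H_W[OF h] unfolding CS_def by auto
  qed
  have "CS Ts = {0} \<or> CS Ts = W"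
    using irrH[OF CSsub[OF order_refl]] Hinv unfolding CS_def by auto
  then have "CS Ts = W" using ne[OF order_refl] by blast
  then show ?thesis using T0_Ts unfolding CS_def by blast
qed

end

context fam begin

definition RR :: "('a ^ 'n \<Rightarrow> 'a ^ 'n) \<Rightarrow> ('a ^ 'n) set" where "RR T = (T ^^ d) ` W"
definition AtS :: "('a ^ 'n \<Rightarrow> 'a ^ 'n) set \<Rightarrow> (('a ^ 'n \<Rightarrow> 'a ^ 'n) \<Rightarrow> bool) \<Rightarrow> ('a ^ 'n) set" where
  "AtS S \<sigma> = {w\<in>W. \<forall>T\<in>S. if \<sigma> T then (T ^^ d) w = 0 else w \<in> RR T}"

lemma RR_sub: "T \<in> Ts \<Longrightarrow> vec.subspace (RR T)"
  unfolding RR_def using vec.linear_subspace_image[OF lin_funpow[OF Ts_lin] W] by blast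

lemma AtS_W: "AtS S \<sigma> \<subseteq> W" unfolding AtS_def by auto

lemma AtS_sub: assumes S: "S \<subseteq> Ts" shows "vec.subspace (AtS S \<sigma>)"
proof -
  have L: "(T ^^ d) (x + y) = (T ^^ d) x + (T ^^ d) y" "(T ^^ d) (c *s x) = c *s (T ^^ d) x" "(T ^^ d) 0 = 0"
    if TS: "T \<in> S" for T x y c
  proof -
    have lT: "lin (T ^^ d)" using lin_funpow Ts_lin S TS by blast
    show "(T ^^ d) (x + y) = (T ^^ d) x + (T ^^ d) y" "(T ^^ d) (c *s x) = c *s (T ^^ d) x" "(T ^^ d) 0 = 0"
      using vec.linear_add[OF lT] vec.linear_scale[OF lT] vec.linear_0[OF lT] by auto
  qed
  have R: "0 \<in> RR T" "x \<in> RR T \<Longrightarrow> y \<in> RR T \<Longrightarrow> x + y \<in> RR T" "x \<in> RR T \<Longrightarrow> c *s x \<in> RR T"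
    if TS: "T \<in> S" for T x y c
    using RR_sub[of T] S TS vec.subspace_0 vec.subspace_add vec.subspace_scale by blast+
  show ?thesis unfolding vec.subspace_def AtS_def
    using W0 vec.subspace_add[OF W] vec.subspace_scale[OF W] by (auto simp: L R)
qed

lemma RR_inv: assumes T: "T \<in> Ts" and T': "T' \<in> Ts" and v: "v \<in> RR T" shows "T' v \<in> RR T"
proof -
  obtain u where u: "u \<in> W" "v = (T ^^ d) u" using v unfolding RR_def by blast
  have "T' v = (T ^^ d) (T' u)" using Ts_pow_comm[OF T T' u(1)] u by simp
  moreover have "T' u \<in> W" using Ts_W[OF T' u(1)] .
  ultimately show ?thesis unfolding RR_def by blast
qed

lemma AtS_inv: assumes S: "S \<subseteq> Ts" and T': "T' \<in> Ts" shows "T' ` AtS S \<sigma> \<subseteq> AtS S \<sigma>"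
proof
  fix v assume "v \<in> T' ` AtS S \<sigma>"
  then obtain w where w: "w \<in> AtS S \<sigma>" "v = T' w" by blast
  have wW: "w \<in> W" using w AtS_W by blast
  have "if \<sigma> T then (T ^^ d) v = 0 else v \<in> RR T" if TS: "T \<in> S" for T
  proof -
    have TT: "T \<in> Ts" using S TS by blast
    have c: "if \<sigma> T then (T ^^ d) w = 0 else w \<in> RR T" using w TS unfolding AtS_def by blast
    show ?thesis
    proof (cases "\<sigma> T")
      case True
      then have "(T ^^ d) w = 0" using c by simp
      moreover have "(T ^^ d) (T' w) = T' ((T ^^ d) w)" using Ts_pow_comm[OF TT T' wW] by simp
      ultimately have "(T ^^ d) v = 0" using w(2) vec.linear_0[OF Ts_lin[OF T']] by simp
      then show ?thesis using True by simp
    next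
      case False
      then have "w \<in> RR T" using c by simp
      then show ?thesis using RR_inv[OF TT T'] w(2) False by simp
    qed
  qed
  then show "v \<in> AtS S \<sigma>" using Ts_W[OF T' wW] w(2) unfolding AtS_def by blast
qed

lemma fit_W: assumes T: "T \<in> Ts"
  shows "\<forall>c\<in>W. \<exists>k r. k \<in> W \<and> (T ^^ d) k = 0 \<and> r \<in> RR T \<and> c = k + r"
    "\<forall>c\<in>W. (T ^^ d) c = 0 \<longrightarrow> c \<in> RR T \<longrightarrow> c = 0"
proof -
  have TW: "T ` W \<subseteq> W" using Ts_W[OF T] by blast
  show "\<forall>c\<in>W. \<exists>k r. k \<in> W \<and> (T ^^ d) k = 0 \<and> r \<in> RR T \<and> c = k + r"
    using fitting(1)[OF Ts_lin[OF T] W TW order_refl] unfolding RR_def .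
  show "\<forall>c\<in>W. (T ^^ d) c = 0 \<longrightarrow> c \<in> RR T \<longrightarrow> c = 0"
    using fitting(2)[OF Ts_lin[OF T] W TW order_refl] unfolding RR_def .
qed

lemma AtS_ne: "S \<subseteq> Ts \<Longrightarrow> \<exists>\<sigma>. AtS S \<sigma> \<noteq> {0}"
proof (induction S rule: infinite_finite_induct)
  case (infinite S) then show ?case using finite_subset[OF _ Ts_fin] by blast
next
  case empty then show ?case unfolding AtS_def using Wne by simp
next
  case (insert T S)
  then have ST: "S \<subseteq> Ts" "T \<in> Ts" by auto
  obtain \<sigma> where "AtS S \<sigma> \<noteq> {0}" using insert ST by blast
  then obtain c where c: "c \<in> AtS S \<sigma>" "c \<noteq> 0" using vec.subspace_0[OF AtS_sub[OF ST(1)]] by blast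
  define C where "C = AtS S \<sigma>"
  have CW: "C \<subseteq> W" unfolding C_def using AtS_W .
  have Csub: "vec.subspace C" unfolding C_def using AtS_sub[OF ST(1)] .
  have TC: "T ` C \<subseteq> C" unfolding C_def using AtS_inv[OF ST] .
  have dC: "vec.dim C \<le> d" using vec.dim_subset[OF CW] .
  obtain k r where kr: "k \<in> C" "(T ^^ d) k = 0" "r \<in> (T ^^ d) ` C" "c = k + r"
    using fitting(1)[OF Ts_lin[OF ST(2)] Csub TC dC] c unfolding C_def by blast
  have rC: "r \<in> C" using kr(3) funpow_inv[OF TC] by blast
  have rR: "r \<in> RR T" using kr(3) CW unfolding RR_def by blast
  have mem: "x \<in> AtS (insert T S) (\<sigma>(T := v))" if "x \<in> C" "if v then (T ^^ d) x = 0 else x \<in> RR T" for x v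
    using that insert.hyps(2) unfolding C_def AtS_def by auto
  show ?case
  proof (cases "k = 0")
    case True
    then have "r \<noteq> 0" using kr(4) c(2) by simp
    then have "AtS (insert T S) (\<sigma>(T := False)) \<noteq> {0}" using mem[OF rC, of False] rR by auto
    then show ?thesis by blast
  next
    case False
    then have "AtS (insert T S) (\<sigma>(T := True)) \<noteq> {0}" using mem[OF kr(1), of True] kr(2) by auto
    then show ?thesis by blast
  qed
qed

abbreviation At where "At \<equiv> AtS Ts"

lemma At_orth: assumes ne: "At \<sigma> \<noteq> At \<tau>" shows "orth (At \<sigma>) (At \<tau>)"
proof -
  obtain T where T: "T \<in> Ts" "\<sigma> T \<noteq> \<tau> T"
  proof (rule ccontr)
    assume "\<not> thesis"
    then have "\<forall>T\<in>Ts. \<sigma> T = \<tau> T" using that by blast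
    then have "At \<sigma> = At \<tau>" unfolding AtS_def by auto
    then show False using ne by simp
  qed
  show ?thesis unfolding orth_def
  proof (intro ballI)
    fix u v assume u: "u \<in> At \<sigma>" and v: "v \<in> At \<tau>"
    have uW: "u \<in> W" and vW: "v \<in> W" using u v AtS_W by auto
    have cu: "if \<sigma> T then (T ^^ d) u = 0 else u \<in> RR T" using u T unfolding AtS_def by blast
    have cv: "if \<tau> T then (T ^^ d) v = 0 else v \<in> RR T" using v T unfolding AtS_def by blast
    have key: "b x y = 0" if xW: "x \<in> W" and x0: "(T ^^ d) x = 0" and yR: "y \<in> RR T" for x y
    proof -
      obtain z where z: "z \<in> W" "y = (T ^^ d) z" using yR unfolding RR_def by blast
      have "b x y = e ^ d * b ((T ^^ d) x) z" using Ts_pow_adj[OF T(1) xW z(1)] z by simp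
      then show ?thesis using x0 by simp
    qed
    show "b u v = 0"
    proof (cases "\<sigma> T")
      case True
      then have "\<not> \<tau> T" using T by simp
      then show ?thesis using key[OF uW] cu cv True by simp
    next
      case False
      then have "\<tau> T" using T by simp
      then have "b v u = 0" using key[OF vW] cu cv False by simp
      then show ?thesis using b_sym by metis
    qed
  qed
qed

lemma At_act: assumes h: "h \<in> H" shows "h ` At \<sigma> \<subseteq> At (\<lambda>T. \<sigma> (cj (ginv h) T))"
proof
  fix v assume "v \<in> h ` At \<sigma>"
  then obtain w where w: "w \<in> At \<sigma>" "v = h w" by blast
  have o: "h \<in> orth_set Q" using H_os h by blast
  have wW: "w \<in> W" using w AtS_W by blast
  have "if \<sigma> (cj (ginv h) T) then (T ^^ d) v = 0 else v \<in> RR T" if TT: "T \<in> Ts" for T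
  proof -
    define T' where "T' = cj (ginv h) T"
    have T'T: "T' \<in> Ts" unfolding T'_def using Ts_decomp(2)[OF h TT] .
    have TT': "T = cj h T'" unfolding T'_def using Ts_decomp(1)[OF h TT] .
    have pw: "(T ^^ d) (h x) = h ((T' ^^ d) x)" for x
      unfolding TT' using cj_funpow[OF o] ginv_l[OF o] by simp
    have c: "if \<sigma> T' then (T' ^^ d) w = 0 else w \<in> RR T'" using w T'T unfolding AtS_def by blast
    show ?thesis
    proof (cases "\<sigma> T'")
      case True
      then have "(T' ^^ d) w = 0" using c by simp
      then have "(T ^^ d) v = 0" using pw[of w] w(2) os_zero[OF o] by simp
      then show ?thesis using True unfolding T'_def by simp
    next
      case False
      then have "w \<in> RR T'" using c by simp
      then obtain z where z: "z \<in> W" "w = (T' ^^ d) z" unfolding RR_def by blast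
      have "v = (T ^^ d) (h z)" using pw[of z] z w(2) by simp
      moreover have "h z \<in> W" using H_W[OF h z(1)] .
      ultimately have "v \<in> RR T" unfolding RR_def by blast
      then show ?thesis using False unfolding T'_def by simp
    qed
  qed
  then show "v \<in> At (\<lambda>T. \<sigma> (cj (ginv h) T))" using H_W[OF h wW] w(2) unfolding AtS_def by blast
qed

lemma At_act_eq: assumes h: "h \<in> H" shows "h ` At \<sigma> = At (\<lambda>T. \<sigma> (cj (ginv h) T))"
proof
  show "h ` At \<sigma> \<subseteq> At (\<lambda>T. \<sigma> (cj (ginv h) T))" using At_act[OF h] .
  have o: "h \<in> orth_set Q" using H_os h by blast
  have hi: "ginv h \<in> H" using H_inv h .
  have eq: "(\<lambda>T. \<sigma> (cj (ginv h) (cj (ginv (ginv h)) T))) = \<sigma>"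
    by (simp add: ginv_ginv[OF o] cj_inv_cj[OF o])
  have "ginv h ` At (\<lambda>T. \<sigma> (cj (ginv h) T)) \<subseteq> At \<sigma>"
    using At_act[OF hi, of "\<lambda>T. \<sigma> (cj (ginv h) T)"] eq by simp
  then show "At (\<lambda>T. \<sigma> (cj (ginv h) T)) \<subseteq> h ` At \<sigma>"
  proof (intro subsetI)
    fix v assume "v \<in> At (\<lambda>T. \<sigma> (cj (ginv h) T))"
    then have "ginv h v \<in> At \<sigma>" using \<open>ginv h ` At (\<lambda>T. \<sigma> (cj (ginv h) T)) \<subseteq> At \<sigma>\<close> by blast
    moreover have "v = h (ginv h v)" using ginv_r[OF o] by simp
    ultimately show "v \<in> h ` At \<sigma>" by blast
  qed
qed

lemma decomp:
  assumes K0: "\<exists>w\<in>W. w \<noteq> 0 \<and> (T0 ^^ d) w = 0" and R0: "\<exists>w\<in>W. (T0 ^^ d) w \<noteq> 0"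
  shows "\<exists>DD. primconcl W H DD"
proof -
  define DD where "DD = {At \<sigma> | \<sigma>. At \<sigma> \<noteq> {0}}"
  have P1: "\<forall>A\<in>DD. vec.subspace A \<and> A \<noteq> {0} \<and> A \<subseteq> W"
    unfolding DD_def using AtS_sub[OF order_refl] AtS_W by blast
  have P2: "\<forall>A\<in>DD. \<forall>B\<in>DD. A \<noteq> B \<longrightarrow> orth A B"
    unfolding DD_def using At_orth by blast
  have P4: "\<forall>h\<in>H. \<forall>A\<in>DD. h ` A \<in> DD"
  proof (intro ballI)
    fix h A assume h: "h \<in> H" and A: "A \<in> DD"
    then obtain \<sigma> where \<sigma>: "A = At \<sigma>" "At \<sigma> \<noteq> {0}" unfolding DD_def by blast
    have "h ` A = At (\<lambda>T. \<sigma> (cj (ginv h) T))" using At_act_eq[OF h] \<sigma> by simp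
    moreover have "h ` A \<noteq> {0}" using nonzero_image[OF H_os[OF h]] \<sigma> AtS_sub[OF order_refl] by blast
    ultimately show "h ` A \<in> DD" unfolding DD_def by blast
  qed
  obtain \<sigma>0 where s0: "At \<sigma>0 \<noteq> {0}" using AtS_ne[OF order_refl] by blast
  have A0: "At \<sigma>0 \<in> DD" unfolding DD_def using s0 by blast
  define S where "S = vec.span (\<Union>DD)"
  have Ssub: "vec.subspace S" unfolding S_def by simp
  have P1': "\<Union>DD \<subseteq> W" unfolding DD_def using AtS_W by blast
  have SW: "S \<subseteq> W" unfolding S_def by (rule vec.span_minimal[OF P1' W])
  have SH: "\<forall>h\<in>H. h ` S \<subseteq> S"
  proof
    fix h assume h: "h \<in> H"
    have "h ` S = vec.span (h ` \<Union>DD)" unfolding S_def using span_image_lin[OF orth_set_lin[OF H_os[OF h]]] by metis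
    also have "\<dots> \<subseteq> vec.span (\<Union>DD)" using P4 h by (intro vec.span_mono) blast
    finally show "h ` S \<subseteq> S" unfolding S_def .
  qed
  have "At \<sigma>0 \<subseteq> S" unfolding S_def using A0 vec.span_superset by blast
  then have "S \<noteq> {0}" using s0 vec.subspace_0[OF AtS_sub[OF order_refl]] by blast
  then have P3: "vec.span (\<Union>DD) = W" using irrH[OF Ssub SW SH] unfolding S_def by blast
  have P5: "\<exists>A\<in>DD. \<exists>B\<in>DD. A \<noteq> B"
  proof (rule ccontr)
    assume "\<not> ?thesis"
    then have "DD = {At \<sigma>0}" using A0 by blast
    then have "\<Union>DD = At \<sigma>0" by simp
    then have "vec.span (At \<sigma>0) = W" using P3 by simp
    moreover have "vec.span (At \<sigma>0) = At \<sigma>0" using AtS_sub[OF order_refl, of \<sigma>0] vec.span_eq_iff by blast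
    ultimately have "At \<sigma>0 = W" by simp
    then have WA: "\<forall>w\<in>W. if \<sigma>0 T0 then (T0 ^^ d) w = 0 else w \<in> RR T0"
      using T0_Ts unfolding AtS_def by blast
    show False
    proof (cases "\<sigma>0 T0")
      case True then show False using WA R0 by simp
    next
      case False
      obtain w where "w \<in> W" "w \<noteq> 0" "(T0 ^^ d) w = 0" using K0 by blast
      then show False using WA False fit_W(2)[OF T0_Ts] by auto
    qed
  qed
  show ?thesis unfolding primconcl_def using P1 P2 P3 P4 P5 by blast
qed

end

context prim begin

definition ZW where "ZW = {g. (\<forall>w\<in>W. g w = w) \<or> (\<forall>w\<in>W. g w = - w)}"

lemma inv_comm:
  assumes p: "p \<in> H" and q: "q \<in> H" and c: "\<forall>w\<in>W. p (q w) = q (p w)"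
  shows "\<forall>w\<in>W. ginv p (q w) = q (ginv p w)"
proof
  fix w assume w: "w \<in> W"
  have op: "p \<in> orth_set Q" using H_os p by blast
  define w' where "w' = ginv p w"
  have w': "w' \<in> W" unfolding w'_def using H_W H_inv p w by blast
  have "p (q w') = q (p w')" using c w' by blast
  also have "p w' = w" unfolding w'_def using ginv_r[OF op] by simp
  finally have "p (q w') = q w" .
  then have "ginv p (q w) = q w'" using ginv_l[OF op] by metis
  then show "ginv p (q w) = q (ginv p w)" unfolding w'_def .
qed

lemma ginv_cj: "h \<in> H \<Longrightarrow> y \<in> H \<Longrightarrow> ginv (cj h y) = cj h (ginv y)"
proof -
  assume h: "h \<in> H" and y: "y \<in> H"
  have oh: "h \<in> orth_set Q" and oy: "y \<in> orth_set Q" using h y H_os by auto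
  have "ginv (cj h y) = ginv (h \<circ> (y \<circ> ginv h))" unfolding cj_def by (simp add: comp_assoc)
  also have "\<dots> = ginv (y \<circ> ginv h) \<circ> ginv h" using ginv_comp[OF oh os_comp[OF oy ginv_in[OF oh]]] .
  also have "\<dots> = (ginv (ginv h) \<circ> ginv y) \<circ> ginv h" using ginv_comp[OF oy ginv_in[OF oh]] by simp
  also have "\<dots> = cj h (ginv y)" unfolding cj_def ginv_ginv[OF oh] by (simp add: comp_assoc)
  finally show ?thesis .
qed

lemma cj_in_H: "h \<in> H \<Longrightarrow> y \<in> H \<Longrightarrow> cj h y \<in> H"
  unfolding cj_def using H_comp H_inv by blast

lemma cj_diff: "h \<in> H \<Longrightarrow> cj h (\<lambda>v. f v - g v) v = cj h f v - cj h g v"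
  unfolding cj_def using os_diff[OF H_os] by simp

lemma Ly:
  assumes y: "y \<in> H" and yZ: "y \<notin> ZW"
    and yc: "\<forall>h\<in>H. \<forall>w\<in>W. y (cj h y w) = cj h y (y w)"
  shows "\<exists>DD. primconcl W H DD"
proof -
  have oy: "y \<in> orth_set Q" using H_os y by blast
  define yi where "yi = ginv y"
  have yi: "yi \<in> H" unfolding yi_def using H_inv y .
  have oyi: "yi \<in> orth_set Q" using H_os yi by blast
  have yW: "w \<in> W \<Longrightarrow> y w \<in> W" and yiW: "w \<in> W \<Longrightarrow> yi w \<in> W" for w using H_W y yi by auto
  have yyi: "y (yi v) = v" "yi (y v) = v" for v unfolding yi_def using ginv_r[OF oy] ginv_l[OF oy] by auto
  have cm: "\<forall>w\<in>W. p (q w) = q (p w)" if pq: "p \<in> {y, yi}" "q \<in> {cj h y, cj h yi}" and h: "h \<in> H" for p q h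
  proof -
    have qH: "cj h y \<in> H" using cj_in_H h y by blast
    have c1: "\<forall>w\<in>W. y (cj h y w) = cj h y (y w)" using yc h by blast
    have c2: "\<forall>w\<in>W. yi (cj h y w) = cj h y (yi w)" unfolding yi_def using inv_comm[OF y qH c1] .
    have c3: "\<forall>w\<in>W. ginv (cj h y) (y w) = y (ginv (cj h y) w)"
      using inv_comm[OF qH y] c1 by metis
    have c4: "\<forall>w\<in>W. ginv (cj h y) (yi w) = yi (ginv (cj h y) w)"
      using inv_comm[OF qH yi] c2 by metis
    have e: "ginv (cj h y) = cj h yi" unfolding yi_def using ginv_cj[OF h y] .
    show ?thesis using pq c1 c2 c3 c4 unfolding e by auto
  qed
  have cjW: "w \<in> W \<Longrightarrow> cj h f w \<in> W" if "h \<in> H" "f \<in> H" for h f w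
    using cj_in_H[OF that] H_W by blast
  define T0 where "T0 v = y v - yi v" for v
  have lT0: "lin T0" unfolding T0_def
    using vec.linear_compose_sub[OF orth_set_lin[OF oy] orth_set_lin[OF oyi]] by (simp add: fun_diff_def)
  have T0W: "T0 ` W \<subseteq> W" unfolding T0_def using yW yiW vec.subspace_diff[OF W] by blast
  have adj0: "\<forall>u\<in>W. \<forall>v\<in>W. b (T0 u) v = (-1) * b u (T0 v)"
  proof (intro ballI)
    fix u v assume "u \<in> W" "v \<in> W"
    have "b (y u) v = b u (yi v)" unfolding yi_def using os_b_inv[OF oy] .
    moreover have "b (yi u) v = b u (y v)" using os_b_inv[OF oyi] ginv_ginv[OF oy] unfolding yi_def by metis
    ultimately show "b (T0 u) v = (-1) * b u (T0 v)" unfolding T0_def by (simp add: b_diff_left b_diff_right)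
  qed
  have base0: "\<forall>h\<in>H. \<forall>w\<in>W. T0 (cj h T0 w) = cj h T0 (T0 w)"
  proof (intro ballI)
    fix h w assume h: "h \<in> H" and w: "w \<in> W"
    have ct: "cj h T0 v = cj h y v - cj h yi v" for v unfolding T0_def using cj_diff[OF h] .
    have A: "y (cj h y w) = cj h y (y w)" "y (cj h yi w) = cj h yi (y w)"
      "yi (cj h y w) = cj h y (yi w)" "yi (cj h yi w) = cj h yi (yi w)"
      using cm[OF _ _ h] w by auto
    have ly: "y (a - c) = y a - y c" "yi (a - c) = yi a - yi c" for a c using os_diff oy oyi by auto
    have lc: "cj h y (a - c) = cj h y a - cj h y c" "cj h yi (a - c) = cj h yi a - cj h yi c" for a c
      using os_diff H_os cj_in_H[OF h y] cj_in_H[OF h yi] by auto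
    show "T0 (cj h T0 w) = cj h T0 (T0 w)"
      unfolding ct T0_def ly lc A by (simp add: algebra_simps)
  qed
  have F0: "fam Q G W H T0 (-1)"
    by (rule fam.intro[OF prim_axioms fam_axioms.intro[OF lT0 T0W _ adj0 base0]]) simp
  have dpos: "d \<ge> 1" using d_pos .
  show ?thesis
  proof (cases "\<exists>w\<in>W. w \<noteq> 0 \<and> (T0 ^^ d) w = 0")
    case False
    \<comment> \<open>T0 injective on W: contradiction with odd dimension\<close>
    have inj: "\<forall>w\<in>W. T0 w = 0 \<longrightarrow> w = 0"
    proof (intro ballI impI)
      fix w assume w: "w \<in> W" "T0 w = 0"
      have "(T0 ^^ d) w = (T0 ^^ (d - 1)) (T0 w)"
        using dpos funpow_Suc_right[of "d - 1" T0] by (metis Suc_diff_1 comp_apply less_le_trans zero_less_one)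
      also have "\<dots> = 0" using w vec.linear_0[OF lin_funpow[OF lT0]] by simp
      finally show "w = 0" using False w by blast
    qed
    have skew: "\<forall>u\<in>W. \<forall>v\<in>W. b (T0 u) v = - b u (T0 v)" using adj0 by simp
    have "even d" using skew_even[OF W ndW lT0 T0W skew inj] .
    then show ?thesis using oddW by simp
  next
    case K0: True
    show ?thesis
    proof (cases "\<exists>w\<in>W. (T0 ^^ d) w \<noteq> 0")
      case True then show ?thesis using fam.decomp[OF F0 K0] by blast
    next
      case False
      then have "\<forall>w\<in>W. T0 w = 0" using fam.unip[OF F0] by blast
      then have yy: "\<forall>w\<in>W. y (y w) = w"
      proof (intro ballI)
        fix w assume "\<forall>w\<in>W. T0 w = 0" "w \<in> W"
        then have "y w = yi w" unfolding T0_def by simp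
        then show "y (y w) = w" using yyi by metis
      qed
      have yiy: "\<forall>w\<in>W. yi w = y w" using yy yyi by metis
      define T1 where "T1 v = y v - v" for v
      have lT1: "lin T1" unfolding T1_def
        using vec.linear_compose_sub[OF orth_set_lin[OF oy] vec.linear_id] by (simp add: fun_diff_def id_def)
      have T1W: "T1 ` W \<subseteq> W" unfolding T1_def using yW vec.subspace_diff[OF W] by blast
      have adj1: "\<forall>u\<in>W. \<forall>v\<in>W. b (T1 u) v = 1 * b u (T1 v)"
      proof (intro ballI)
        fix u v assume "u \<in> W" "v \<in> W"
        have "b (y u) v = b u (yi v)" unfolding yi_def using os_b_inv[OF oy] .
        then have "b (y u) v = b u (y v)" using yiy \<open>v \<in> W\<close> by simp
        then show "b (T1 u) v = 1 * b u (T1 v)" unfolding T1_def by (simp add: b_diff_left b_diff_right)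
      qed
      have base1: "\<forall>h\<in>H. \<forall>w\<in>W. T1 (cj h T1 w) = cj h T1 (T1 w)"
      proof (intro ballI)
        fix h w assume h: "h \<in> H" and w: "w \<in> W"
        have oh: "h \<in> orth_set Q" using H_os h by blast
        have ct: "cj h T1 v = cj h y v - v" for v
          unfolding T1_def using cj_diff[OF h, of y "\<lambda>v. v" v] ginv_r[OF oh] by (simp add: cj_def)
        have A: "y (cj h y w) = cj h y (y w)" using yc h w by blast
        have ly: "y (a - c) = y a - y c" for a c using os_diff oy by auto
        have lc: "cj h y (a - c) = cj h y a - cj h y c" for a c
          using os_diff H_os cj_in_H[OF h y] by auto
        show "T1 (cj h T1 w) = cj h T1 (T1 w)"
          unfolding ct T1_def ly lc A by (simp add: algebra_simps)
      qed
      have F1: "fam Q G W H T1 1"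
        by (rule fam.intro[OF prim_axioms fam_axioms.intro[OF lT1 T1W _ adj1 base1]]) simp
      show ?thesis
      proof (cases "\<exists>w\<in>W. w \<noteq> 0 \<and> (T1 ^^ d) w = 0")
        case False
        have "\<forall>w\<in>W. y w = - w"
        proof
          fix w assume w: "w \<in> W"
          have yw: "y w + w \<in> W" using yW[OF w] w vec.subspace_add[OF W] by blast
          have "T1 (y w + w) = 0" unfolding T1_def using yy w os_add[OF oy] by simp
          then have "(T1 ^^ d) (y w + w) = 0"
            using dpos funpow_Suc_right[of "d - 1" T1] vec.linear_0[OF lin_funpow[OF lT1]]
            by (metis Suc_diff_1 comp_apply less_le_trans zero_less_one)
          then have "y w + w = 0" using False yw by blast
          then show "y w = - w" by (simp add: eq_neg_iff_add_eq_0)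
        qed
        then show ?thesis using yZ unfolding ZW_def by blast
      next
        case K1: True
        show ?thesis
        proof (cases "\<exists>w\<in>W. (T1 ^^ d) w \<noteq> 0")
          case True then show ?thesis using fam.decomp[OF F1 K1] by blast
        next
          case False
          then have "\<forall>w\<in>W. T1 w = 0" using fam.unip[OF F1] by blast
          then have "\<forall>w\<in>W. y w = w" unfolding T1_def by simp
          then show ?thesis using yZ unfolding ZW_def by blast
        qed
      qed
    qed
  qed
qed

end

context prim begin

lemma sq_comm:
  assumes p: "p \<in> H" and q: "q \<in> H"
    and c: "(\<forall>w\<in>W. p (q w) = q (p w)) \<or> (\<forall>w\<in>W. p (q w) = - q (p w))"
    and w: "w \<in> W"
  shows "p (p (q (q w))) = q (q (p (p w)))"
  using c
proof
  assume c: "\<forall>w\<in>W. p (q w) = q (p w)"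
  have pW: "z \<in> W \<Longrightarrow> p z \<in> W" and qW: "z \<in> W \<Longrightarrow> q z \<in> W" for z using H_W p q by auto
  have "p (p (q (q w))) = p (q (p (q w)))" using c qW[OF w] by simp
  also have "\<dots> = q (p (p (q w)))" using c pW qW w by simp
  also have "\<dots> = q (p (q (p w)))" using c w by simp
  also have "\<dots> = q (q (p (p w)))" using c pW w by simp
  finally show ?thesis .
next
  assume c: "\<forall>w\<in>W. p (q w) = - q (p w)"
  have op: "p \<in> orth_set Q" and oq: "q \<in> orth_set Q" using H_os p q by auto
  have pW: "z \<in> W \<Longrightarrow> p z \<in> W" and qW: "z \<in> W \<Longrightarrow> q z \<in> W" for z using H_W p q by auto
  have c': "p (q z) = - q (p z)" if "z \<in> W" for z using c that by blast
  have s1: "p (q (q w)) = - q (p (q w))" using c'[OF qW[OF w]] .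
  have s2: "p (q (p (q w))) = - q (p (p (q w)))" using c'[OF pW[OF qW[OF w]]] .
  have s3: "p (q w) = - q (p w)" using c'[OF w] .
  have s4: "p (q (p w)) = - q (p (p w))" using c'[OF pW[OF w]] .
  have "p (p (q (q w))) = - p (q (p (q w)))" unfolding s1 using os_neg[OF op] by simp
  also have "\<dots> = q (p (p (q w)))" unfolding s2 by simp
  also have "p (p (q w)) = - p (q (p w))" unfolding s3 using os_neg[OF op] by simp
  also have "\<dots> = q (p (p w))" unfolding s4 by simp
  finally show ?thesis .
qed

lemma prim_main: "\<exists>DD. primconcl W H DD"
proof -
  have idZ: "id \<in> ZW" unfolding ZW_def by simp
  have HZ: "\<not> H \<subseteq> ZW"
  proof
    assume HZ: "H \<subseteq> ZW"
    obtain w where w: "w \<in> W" "w \<noteq> 0" using Wne W0 by blast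
    define U where "U = vec.span {w}"
    have Usub: "vec.subspace U" unfolding U_def by simp
    have wU: "w \<in> U" unfolding U_def by (simp add: vec.span_base)
    have UW: "U \<subseteq> W" unfolding U_def using vec.span_minimal[of "{w}" W] w W by simp
    have UH: "\<forall>h\<in>H. h ` U \<subseteq> U"
    proof
      fix h assume h: "h \<in> H"
      have "h w = w \<or> h w = - w" using HZ h w unfolding ZW_def by blast
      moreover have nw: "- w \<in> U" unfolding U_def by (intro vec.span_neg vec.span_base) simp
      ultimately have hwU: "h w \<in> U" using wU by auto
      have "h ` U = vec.span {h w}" unfolding U_def
        using span_image_lin[OF orth_set_lin[OF H_os[OF h]], of "{w}"] by simp
      also have "\<dots> \<subseteq> U" using vec.span_minimal[of "{h w}" U] hwU Usub by simp
      finally show "h ` U \<subseteq> U" .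
    qed
    have "U \<noteq> {0}" using wU w by blast
    then have "U = W" using irrH[OF Usub UW UH] by blast
    then have "d = vec.dim {w}" unfolding U_def using vec.dim_span by metis
    then have "d = 1" using w vec.dim_singleton by simp
    then show False using dimW by simp
  qed
  obtain N where N: "N \<subseteq> H" "subgroup N (orth_group Q)" "\<forall>h\<in>H. \<forall>x\<in>N. h \<circ> x \<circ> ginv h \<in> N"
    "\<not> N \<subseteq> ZW" "\<forall>x\<in>N. \<forall>y\<in>N. x \<circ> y \<circ> ginv x \<circ> ginv y \<in> ZW"
    using derived_extract[OF subG solvG subH HG idZ HZ] by blast
  have NH: "x \<in> N \<Longrightarrow> x \<in> H" for x using N(1) by blast
  have Ncomp: "x \<in> N \<Longrightarrow> y \<in> N \<Longrightarrow> x \<circ> y \<in> N" for x y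
    using subgroup.m_closed[OF N(2)] mult_O by metis
  have cjN: "h \<in> H \<Longrightarrow> x \<in> N \<Longrightarrow> cj h x \<in> N" for h x unfolding cj_def using N(3) by blast
  have na: "\<not> (\<forall>w\<in>W. x (x w) = - w)" if xN: "x \<in> N" for x
  proof
    assume xx: "\<forall>w\<in>W. x (x w) = - w"
    have xH: "x \<in> H" using NH xN .
    have ox: "x \<in> orth_set Q" using H_os xH .
    have xW: "x ` W \<subseteq> W" using H_W xH by blast
    have gi: "ginv x v = - x v" if "v \<in> W" for v
    proof -
      have "x (- x v) = v" using xx that os_neg[OF ox] by simp
      then show ?thesis using ginv_l[OF ox] by metis
    qed
    have skew: "\<forall>u\<in>W. \<forall>v\<in>W. b (x u) v = - b u (x v)"
      using os_b_inv[OF ox] gi b_neg_right by simp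
    have inj: "\<forall>w\<in>W. x w = 0 \<longrightarrow> w = 0" using os_inj[OF ox] os_zero[OF ox] by metis
    have "even d" using skew_even[OF W ndW orth_set_lin[OF ox] xW skew inj] .
    then show False using oddW by simp
  qed
  have sg: "(\<forall>w\<in>W. x (x' w) = x' (x w)) \<or> (\<forall>w\<in>W. x (x' w) = - x' (x w))" if "x \<in> N" "x' \<in> N" for x x'
  proof -
    have ox: "x \<in> orth_set Q" and ox': "x' \<in> orth_set Q" using that NH H_os by auto
    define c where "c = x \<circ> x' \<circ> ginv x \<circ> ginv x'"
    have cZ: "c \<in> ZW" unfolding c_def using N(5) that by blast
    have cu: "c (x' (x w)) = x (x' w)" for w unfolding c_def using ginv_l[OF ox] ginv_l[OF ox'] by simp
    have uW: "w \<in> W \<Longrightarrow> x' (x w) \<in> W" for w using H_W NH that by blast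
    have "(\<forall>w\<in>W. c w = w) \<or> (\<forall>w\<in>W. c w = - w)" using cZ unfolding ZW_def by blast
    then show ?thesis
    proof
      assume h: "\<forall>w\<in>W. c w = w"
      have "x (x' w) = x' (x w)" if "w \<in> W" for w using h uW[OF that] cu[of w] by metis
      then show ?thesis by blast
    next
      assume h: "\<forall>w\<in>W. c w = - w"
      have "x (x' w) = - x' (x w)" if "w \<in> W" for w using h uW[OF that] cu[of w] by metis
      then show ?thesis by blast
    qed
  qed
  obtain x where x: "x \<in> N" "x \<notin> ZW" using N(4) by blast
  have xH: "x \<in> H" using NH x(1) .
  have ox: "x \<in> orth_set Q" using H_os xH .
  show ?thesis
  proof (cases "x \<circ> x \<in> ZW")
    case False
    define y where "y = x \<circ> x"
    have yN: "y \<in> N" unfolding y_def using Ncomp x(1) by blast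
    have yc: "\<forall>h\<in>H. \<forall>w\<in>W. y (cj h y w) = cj h y (y w)"
    proof (intro ballI)
      fix h w assume h: "h \<in> H" and w: "w \<in> W"
      have oh: "h \<in> orth_set Q" using H_os h .
      have e: "cj h y v = cj h x (cj h x v)" for v unfolding y_def cj_def using ginv_l[OF oh] by simp
      have x'H: "cj h x \<in> H" using NH cjN h x(1) by blast
      have "x (x (cj h x (cj h x w))) = cj h x (cj h x (x (x w)))"
        using sq_comm[OF xH x'H sg[OF x(1) cjN[OF h x(1)]] w] .
      then show "y (cj h y w) = cj h y (y w)" unfolding e by (simp add: y_def)
    qed
    show ?thesis using Ly[OF NH[OF yN] False[folded y_def] yc] .
  next
    case True
    have xx: "\<forall>w\<in>W. x (x w) = w"
      using True na[OF x(1)] unfolding ZW_def by auto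
    show ?thesis
    proof (cases "\<forall>h\<in>H. \<forall>w\<in>W. x (cj h x w) = cj h x (x w)")
      case True
      then show ?thesis using Ly[OF xH x(2)] by blast
    next
      case False
      then obtain h w0 where h: "h \<in> H" and w0: "w0 \<in> W" "x (cj h x w0) \<noteq> cj h x (x w0)" by blast
      have oh: "h \<in> orth_set Q" using H_os h .
      define x' where "x' = cj h x"
      have x'N: "x' \<in> N" unfolding x'_def using cjN h x(1) by blast
      have x'H: "x' \<in> H" using NH x'N .
      have ox': "x' \<in> orth_set Q" using H_os x'H .
      have anti: "\<forall>w\<in>W. x (x' w) = - x' (x w)" using sg[OF x(1) x'N] w0 unfolding x'_def by auto
      have x'x': "x' (x' w) = w" if "w \<in> W" for w
      proof -
        have "ginv h w \<in> W" using H_W H_inv h that by blast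
        then show ?thesis unfolding x'_def cj_def using xx ginv_l[OF oh] ginv_r[OF oh] by simp
      qed
      define z where "z = x \<circ> x'"
      have zN: "z \<in> N" unfolding z_def using Ncomp x(1) x'N by blast
      have "\<forall>w\<in>W. z (z w) = - w"
      proof
        fix w assume w: "w \<in> W"
        have x'w: "x' w \<in> W" using H_W x'H w by blast
        have "z (z w) = x (x' (x (x' w)))" unfolding z_def by simp
        also have "x' (x (x' w)) = - x (x' (x' w))" using anti x'w H_W x'H by (metis minus_minus)
        also have "x (- x (x' (x' w))) = - x (x (x' (x' w)))" using os_neg[OF ox] by simp
        also have "\<dots> = - w" using x'x'[OF w] xx w by simp
        finally show "z (z w) = - w" .
      qed
      then show ?thesis using na[OF zN] by blast
    qed
  qed
qed

end

context setting begin

lemma orth_mono: "orth X Y \<Longrightarrow> A \<subseteq> X \<Longrightarrow> B \<subseteq> Y \<Longrightarrow> orth A B"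
  unfolding orth_def by (meson subsetD)

lemma setting_prim:
  assumes "vec.subspace W" "nondegW W" "odd (vec.dim W)" "vec.dim W \<noteq> 1"
    "subgroup H (orth_group Q)" "H \<subseteq> G" "\<forall>h\<in>H. h ` W = W"
    "\<And>U. vec.subspace U \<Longrightarrow> U \<subseteq> W \<Longrightarrow> (\<forall>h\<in>H. h ` U \<subseteq> U) \<Longrightarrow> U = {0} \<or> U = W"
  shows "\<exists>DD. primconcl W H DD"
  using prim.prim_main[OF prim.intro[OF setting_axioms prim_axioms.intro[OF assms]]] .

lemma refine:
  assumes D: "osys D" and X: "X \<in> D" and dX: "vec.dim X \<noteq> 1"
  shows "\<exists>D'. osys D' \<and> card D < card D'"
proof -
  have Xsub: "vec.subspace X" using osys_sub[OF D X] .
  have ndX: "nondegW X" using osys_nondeg[OF D X] .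
  have oddX: "odd (vec.dim X)" using osys_card_dim[OF D X] oddn by simp
  define H where "H = {g\<in>G. g ` X = X}"
  have HG: "H \<subseteq> G" unfolding H_def by blast
  have subH: "subgroup H (orth_group Q)"
  proof (rule group.subgroupI[OF group_O])
    show "H \<subseteq> carrier (orth_group Q)" using HG G_os carrier_O by blast
    show "H \<noteq> {}" unfolding H_def using G_id by auto
  next
    fix a assume a: "a \<in> H"
    have oa: "a \<in> orth_set Q" using a HG G_os by blast
    have aX: "a ` X = X" using a unfolding H_def by blast
    have "ginv a ` X = ginv a ` (a ` X)" using aX by simp
    also have "\<dots> = X" by (simp add: image_image ginv_l[OF oa])
    finally have "ginv a ` X = X" .
    then show "inv\<^bsub>orth_group Q\<^esub> a \<in> H" using G_inv a unfolding H_def ginv_def by blast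
  next
    fix a c assume "a \<in> H" "c \<in> H"
    then have ac: "a \<in> G" "c \<in> G" "a ` X = X" "c ` X = X" unfolding H_def by auto
    then have "(a \<circ> c) ` X = X" by (metis image_comp)
    then show "a \<otimes>\<^bsub>orth_group Q\<^esub> c \<in> H" unfolding H_def mult_O using G_comp ac by blast
  qed
  have HX: "\<forall>h\<in>H. h ` X = X" unfolding H_def by blast
  have irrH: "U = {0} \<or> U = X" if U: "vec.subspace U" "U \<subseteq> X" "\<forall>h\<in>H. h ` U \<subseteq> U" for U
  proof (cases "U = {0}")
    case False
    define S where "S = vec.span (\<Union>g\<in>G. g ` U)"
    have "\<forall>h\<in>G. h ` (\<Union>g\<in>G. g ` U) \<subseteq> (\<Union>g\<in>G. g ` U)"
    proof (intro ballI subsetI)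
      fix h v assume h: "h \<in> G" and "v \<in> h ` (\<Union>g\<in>G. g ` U)"
      then obtain g u where "g \<in> G" "u \<in> U" "v = h (g u)" by blast
      then show "v \<in> (\<Union>g\<in>G. g ` U)" using G_comp[OF h] by (metis UN_iff comp_apply image_eqI)
    qed
    then have "\<forall>h\<in>G. h ` S \<subseteq> S" unfolding S_def using G_inv_span[of "\<Union>g\<in>G. g ` U"] by blast
    then have "S = {0} \<or> S = UNIV" using irrD unfolding S_def by simp
    moreover have "U \<subseteq> S" unfolding S_def using G_id vec.span_superset by fastforce
    ultimately have SU: "S = UNIV" using False vec.subspace_0[OF U(1)] by blast
    define R where "R = (\<Union>g\<in>{g\<in>G. g ` X \<noteq> X}. g ` U)"
    have sub: "(\<Union>g\<in>G. g ` U) \<subseteq> U \<union> R"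
    proof
      fix v assume "v \<in> (\<Union>g\<in>G. g ` U)"
      then obtain g where g: "g \<in> G" "v \<in> g ` U" by blast
      show "v \<in> U \<union> R"
      proof (cases "g ` X = X")
        case True then have "g \<in> H" unfolding H_def using g by blast
        then show ?thesis using U(3) g by blast
      next
        case False then show ?thesis unfolding R_def using g by blast
      qed
    qed
    have oR: "orth X R"
      unfolding orth_def
    proof (intro ballI)
      fix u v assume u: "u \<in> X" and v: "v \<in> R"
      then obtain g where g: "g \<in> G" "g ` X \<noteq> X" "v \<in> g ` U" unfolding R_def by blast
      have "g ` X \<in> D" using osys_inv[OF D g(1) X] .
      then have "orth X (g ` X)" using osys_orth[OF D X] g(2) by metis
      moreover have "v \<in> g ` X" using g(3) U(2) by blast
      ultimately show "b u v = 0" using u unfolding orth_def by blast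
    qed
    have spU: "vec.span U = U" using U(1) by simp
    show ?thesis
    proof (rule disjI2, rule antisym[OF U(2)], rule subsetI)
      fix w assume w: "w \<in> X"
      have "w \<in> vec.span (U \<union> R)" using SU sub vec.span_mono unfolding S_def by blast
      then obtain a r where ar: "w = a + r" "a \<in> U" "r \<in> vec.span R"
        using vec.span_Un[of U R] spU by auto
      have rX: "r \<in> X" using ar w U(2) vec.subspace_diff[OF Xsub, of w a]
        by (metis add_diff_cancel_left' subsetD)
      have "orth X (vec.span R)" using orth_span[OF oR] .
      then have "r = 0" using orth_nondeg_inter[OF ndX _ rX ar(3)] by blast
      then show "w \<in> U" using ar by simp
    qed
  qed simp
  obtain DD where DD: "primconcl X H DD"
    using setting_prim[OF Xsub ndX oddX dX subH HG HX irrH] by blast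
  have DD1: "\<forall>A\<in>DD. vec.subspace A \<and> A \<noteq> {0} \<and> A \<subseteq> X"
    and DD2: "\<forall>A\<in>DD. \<forall>B\<in>DD. A \<noteq> B \<longrightarrow> orth A B"
    and DD3: "vec.span (\<Union>DD) = X"
    and DD4: "\<forall>h\<in>H. \<forall>A\<in>DD. h ` A \<in> DD"
    and DD5: "\<exists>A\<in>DD. \<exists>B\<in>DD. A \<noteq> B" using DD unfolding primconcl_def by blast+
  define D' where "D' = {g ` A | g A. g \<in> G \<and> A \<in> DD}"
  have DDa: "\<And>A. A \<in> DD \<Longrightarrow> vec.subspace A" and DDb: "\<And>A. A \<in> DD \<Longrightarrow> A \<noteq> {0}"
    and DDc: "\<And>A. A \<in> DD \<Longrightarrow> A \<subseteq> X" using DD1 by auto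
  have gAX: "g ` A \<subseteq> g ` X" if "A \<in> DD" for g A using DDc[OF that] by (rule image_mono)
  have D'1: "\<forall>Z\<in>D'. vec.subspace Z \<and> Z \<noteq> {0}"
  proof
    fix Z assume "Z \<in> D'"
    then obtain g A where gA: "g \<in> G" "A \<in> DD" "Z = g ` A" unfolding D'_def by blast
    have og: "g \<in> orth_set Q" using G_os gA(1) .
    show "vec.subspace Z \<and> Z \<noteq> {0}"
      unfolding gA(3) using subspace_image_os[OF og DDa[OF gA(2)]] nonzero_image[OF og DDb[OF gA(2)] DDa[OF gA(2)]] by simp
  qed
  have D'2: "\<forall>Z\<in>D'. \<forall>Z'\<in>D'. Z \<noteq> Z' \<longrightarrow> orth Z Z'"
  proof (intro ballI impI)
    fix Z Z' assume Z: "Z \<in> D'" and Z': "Z' \<in> D'" and ne: "Z \<noteq> Z'"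
    obtain g A where gA: "g \<in> G" "A \<in> DD" "Z = g ` A" using Z unfolding D'_def by blast
    obtain g' A' where gA': "g' \<in> G" "A' \<in> DD" "Z' = g' ` A'" using Z' unfolding D'_def by blast
    have og: "g \<in> orth_set Q" and og': "g' \<in> orth_set Q" using G_os[OF gA(1)] G_os[OF gA'(1)] by auto
    show "orth Z Z'"
    proof (cases "g ` X = g' ` X")
      case False
      have "orth (g ` X) (g' ` X)" using osys_orth[OF D osys_inv[OF D gA(1) X] osys_inv[OF D gA'(1) X] False] .
      then show ?thesis unfolding gA(3) gA'(3) by (rule orth_mono[OF _ gAX[OF gA(2)] gAX[OF gA'(2)]])
    next
      case True
      define h where "h = ginv g \<circ> g'"
      have hG: "h \<in> G" unfolding h_def using G_comp G_inv gA(1) gA'(1) by blast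
      have "h ` X = ginv g ` (g ` X)" unfolding h_def using True by (simp add: image_comp)
      also have "\<dots> = X" using ginv_l[OF og] by (simp add: image_comp)
      finally have hH: "h \<in> H" unfolding H_def using hG by blast
      have e: "g' ` A' = g ` (h ` A')" unfolding h_def using ginv_r[OF og] by (simp add: image_comp comp_def)
      have hA': "h ` A' \<in> DD" using DD4 hH gA'(2) by blast
      have "A \<noteq> h ` A'" using ne e gA(3) gA'(3) by blast
      then have "orth A (h ` A')" using DD2 gA(2) hA' by blast
      then show ?thesis unfolding gA(3) gA'(3) e using orth_image[OF og] by blast
    qed
  qed
  have D'3: "vec.span (\<Union>D') = UNIV"
  proof -
    have "\<Union>D \<subseteq> vec.span (\<Union>D')"
    proof
      fix v assume "v \<in> \<Union>D"
      then obtain Y where Y: "Y \<in> D" "v \<in> Y" by blast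
      obtain g where g: "g \<in> G" "g ` X = Y" using osys_trans[OF D X Y(1)] by blast
      have "Y = g ` vec.span (\<Union>DD)" using g DD3 by simp
      also have "\<dots> = vec.span (g ` \<Union>DD)" using span_image_lin[OF orth_set_lin[OF G_os[OF g(1)]]] by metis
      also have "\<dots> \<subseteq> vec.span (\<Union>D')" unfolding D'_def using g(1) by (intro vec.span_mono) blast
      finally show "v \<in> vec.span (\<Union>D')" using Y by blast
    qed
    then have "vec.span (\<Union>D) \<subseteq> vec.span (\<Union>D')" using vec.span_minimal vec.subspace_span by blast
    then show ?thesis using osys_span[OF D] by blast
  qed
  have D'4: "\<forall>g\<in>G. \<forall>Z\<in>D'. g ` Z \<in> D'"
  proof (intro ballI)
    fix g Z assume g: "g \<in> G" and "Z \<in> D'"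
    then obtain g' A where gA: "g' \<in> G" "A \<in> DD" "Z = g' ` A" unfolding D'_def by blast
    have "g ` Z = (g \<circ> g') ` A" unfolding gA(3) by (rule image_comp)
    moreover have "g \<circ> g' \<in> G" using G_comp[OF g gA(1)] .
    ultimately show "g ` Z \<in> D'" unfolding D'_def using gA(2) by blast
  qed
  have D': "osys D'" unfolding osys_def using D'1 D'2 D'3 D'4 by blast
  have finD': "finite D'" using osys_finite(1)[OF D'] .
  obtain A0 A1 where A: "A0 \<in> DD" "A1 \<in> DD" "A0 \<noteq> A1" using DD5 by blast
  define gs where "gs Y = (SOME g. g \<in> G \<and> g ` X = Y)" for Y
  have gs: "gs Y \<in> G" "gs Y ` X = Y" if YD: "Y \<in> D" for Y
  proof -
    have "\<exists>g. g \<in> G \<and> g ` X = Y" using osys_trans[OF D X YD] by blast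
    from someI_ex[OF this] show "gs Y \<in> G" "gs Y ` X = Y" unfolding gs_def by auto
  qed
  define \<psi> where "\<psi> Y = gs Y ` A0" for Y
  have psiD': "\<psi> ` D \<subseteq> D'" unfolding \<psi>_def D'_def using gs A(1) by blast
  have psi_sub: "\<psi> Y \<subseteq> Y" if "Y \<in> D" for Y unfolding \<psi>_def using gAX[OF A(1), of "gs Y"] gs(2)[OF that] by simp
  have psi_ne: "\<psi> Y \<noteq> {0}" if "Y \<in> D" for Y
    unfolding \<psi>_def using nonzero_image[OF G_os[OF gs(1)[OF that]] DDb[OF A(1)] DDa[OF A(1)]] .
  have common: "Y = Y'" if YY: "Y \<in> D" "Y' \<in> D" "Z \<subseteq> Y" "Z \<subseteq> Y'" "Z \<noteq> {0}" "vec.subspace Z" for Y Y' Z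
  proof -
    obtain v where "v \<in> Z" "v \<noteq> 0" using YY(5,6) vec.subspace_0 by blast
    then show ?thesis using osys_common[OF D YY(1,2)] YY(3,4) by blast
  qed
  have psi_subsp: "vec.subspace (\<psi> Y)" if "Y \<in> D" for Y
    unfolding \<psi>_def using subspace_image_os[OF G_os[OF gs(1)[OF that]] DDa[OF A(1)]] .
  have inj: "inj_on \<psi> D"
  proof (rule inj_onI)
    fix Y Y' assume "Y \<in> D" "Y' \<in> D" "\<psi> Y = \<psi> Y'"
    then show "Y = Y'" using common[of Y Y' "\<psi> Y"] psi_sub psi_ne psi_subsp by metis
  qed
  define z where "z = gs X ` A1"
  have zD': "z \<in> D'" unfolding z_def D'_def using gs[OF X] A(2) by blast
  have znot: "z \<notin> \<psi> ` D"
  proof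
    assume "z \<in> \<psi> ` D"
    then obtain Y where Y: "Y \<in> D" "z = \<psi> Y" by blast
    have zX: "z \<subseteq> X" unfolding z_def using gAX[OF A(2), of "gs X"] gs(2)[OF X] by simp
    have zY: "z \<subseteq> Y" and zne: "z \<noteq> {0}" and zs: "vec.subspace z"
      using psi_sub[OF Y(1)] psi_ne[OF Y(1)] psi_subsp[OF Y(1)] Y(2) by simp_all
    have "X = Y" using common[OF X Y(1) zX zY zne zs] .
    then have "gs X ` A1 = gs X ` A0" using Y(2) unfolding z_def \<psi>_def by simp
    moreover have "inj (gs X)" using orth_set_bij[OF G_os[OF gs(1)[OF X]]] by (simp add: bij_def)
    ultimately show False using A(3) by (simp add: inj_image_eq_iff)
  qed
  have "card (insert z (\<psi> ` D)) \<le> card D'"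
    using card_mono[OF finD'] psiD' zD' by blast
  moreover have "card (insert z (\<psi> ` D)) = Suc (card D)"
    using znot card_image[OF inj] osys_finite(1)[OF D] by simp
  ultimately show ?thesis using D' by auto
qed

lemma exists_lines: "\<exists>D. osys D \<and> (\<forall>X\<in>D. vec.dim X = 1)"
proof -
  define M where "M = {card D | D. osys D}"
  have "M \<subseteq> {..CARD('n)}"
  proof
    fix m assume "m \<in> M"
    then obtain D where "osys D" "m = card D" unfolding M_def by blast
    then show "m \<in> {..CARD('n)}" using osys_finite(2) by simp
  qed
  then have finM: "finite M" using finite_subset by blast
  have "card {UNIV :: ('a ^ 'n) set} \<in> M" unfolding M_def using osys_UNIV by blast
  then have neM: "M \<noteq> {}" by blast
  have "Max M \<in> M" using Max_in[OF finM neM] .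
  then obtain D where D: "osys D" "card D = Max M" unfolding M_def by auto
  have max: "card D' \<le> card D" if D': "osys D'" for D'
  proof -
    have "card D' \<in> M" unfolding M_def using D' by blast
    then show ?thesis using Max_ge[OF finM] D(2) by simp
  qed
  have "\<forall>X\<in>D. vec.dim X = 1"
  proof (rule ccontr)
    assume "\<not> ?thesis"
    then obtain X where "X \<in> D" "vec.dim X \<noteq> 1" by blast
    then obtain D' where "osys D'" "card D < card D'" using refine[OF D(1)] by blast
    then show False using max by fastforce
  qed
  then show ?thesis using D(1) by blast
qed

end

context setting begin

lemma final_concl:
  "\<exists>W :: 'n \<Rightarrow> ('a ^ 'n) set.
           (\<forall>i. vec.subspace (W i) \<and> vec.dim (W i) = 1)
         \<and> (\<forall>i j. i \<noteq> j \<longrightarrow> (\<forall>u\<in>W i. \<forall>v\<in>W j. polarization Q u v = 0))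
         \<and> (\<forall>v. \<exists>!w. (\<forall>i. w i \<in> W i) \<and> v = (\<Sum>i\<in>UNIV. w i))
         \<and> (\<forall>g\<in>G. \<forall>i. \<exists>j. g ` W i = W j)"
proof -
  obtain D where D: "osys D" "\<forall>X\<in>D. vec.dim X = 1" using exists_lines by blast
  have finD: "finite D" using osys_finite(1)[OF D(1)] .
  have pr: "\<forall>X\<in>D. vec.subspace X \<and> nondegW X" "\<forall>X\<in>D. \<forall>Y\<in>D. X \<noteq> Y \<longrightarrow> orth X Y"
    using osys_sub[OF D(1)] osys_nondeg[OF D(1)] osys_orth[OF D(1)] by auto
  have "CARD('n) = vec.dim (vec.span (\<Union>D))" using osys_span[OF D(1)] dim_UNIV_n by simp
  also have "\<dots> = (\<Sum>X\<in>D. vec.dim X)" using dim_span_orth[OF finD pr] .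
  also have "\<dots> = card D" using D(2) by simp
  finally have cardD: "card (UNIV :: 'n set) = card D" by simp
  obtain Wf where bij: "bij_betw Wf (UNIV :: 'n set) D"
    using finite_same_card_bij[OF finite_class.finite_UNIV finD cardD] by blast
  have WfD: "Wf i \<in> D" for i using bij unfolding bij_betw_def by blast
  have injW: "inj Wf" using bij unfolding bij_betw_def by blast
  have imW: "Wf ` UNIV = D" using bij unfolding bij_betw_def by blast
  have sW: "vec.subspace (Wf i)" for i using osys_sub[OF D(1) WfD] .
  have P1: "\<forall>i. vec.subspace (Wf i) \<and> vec.dim (Wf i) = 1" using sW D(2) WfD by blast
  have orthW: "orth (Wf i) (Wf j)" if "i \<noteq> j" for i j
    using osys_orth[OF D(1) WfD WfD] injW that by (metis injD)
  have P2: "\<forall>i j. i \<noteq> j \<longrightarrow> (\<forall>u\<in>Wf i. \<forall>v\<in>Wf j. polarization Q u v = 0)"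
    using orthW unfolding orth_def by blast
  have P3: "\<forall>v. \<exists>!w. (\<forall>i. w i \<in> Wf i) \<and> v = (\<Sum>i\<in>UNIV. w i)"
  proof
    fix v :: "'a ^ 'n"
    show "\<exists>!w. (\<forall>i. w i \<in> Wf i) \<and> v = (\<Sum>i\<in>UNIV. w i)"
    proof (rule ex_ex1I)
      have "v \<in> vec.span (\<Union>D)" using osys_span[OF D(1)] by simp
      then obtain f where f: "v = sum f D" "\<forall>X\<in>D. f X \<in> X"
        using span_sum_rep[OF finD] pr(1) by auto
      have "sum f D = (\<Sum>i\<in>UNIV. f (Wf i))"
        using sum.reindex[of Wf UNIV f] injW imW by simp
      then show "\<exists>w. (\<forall>i. w i \<in> Wf i) \<and> v = (\<Sum>i\<in>UNIV. w i)"
        using f WfD by (intro exI[of _ "\<lambda>i. f (Wf i)"]) auto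
    next
      fix w1 w2 assume w1: "(\<forall>i. w1 i \<in> Wf i) \<and> v = (\<Sum>i\<in>UNIV. w1 i)"
        and w2: "(\<forall>i. w2 i \<in> Wf i) \<and> v = (\<Sum>i\<in>UNIV. w2 i)"
      show "w1 = w2"
      proof
        fix i
        define z where "z j = w1 j - w2 j" for j
        have zW: "z j \<in> Wf j" for j unfolding z_def using w1 w2 vec.subspace_diff[OF sW] by blast
        have s0: "(\<Sum>j\<in>UNIV. z j) = 0" unfolding z_def using w1 w2 by (simp add: sum_subtractf)
        have "b u (z i) = 0" if u: "u \<in> Wf i" for u
        proof -
          have "0 = b u (\<Sum>j\<in>UNIV. z j)" using s0 by simp
          also have "\<dots> = (\<Sum>j\<in>UNIV. b u (z j))" using b_sum_right .
          also have "\<dots> = b u (z i) + (\<Sum>j\<in>UNIV - {i}. b u (z j))"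
            by (rule sum.remove) auto
          also have "(\<Sum>j\<in>UNIV - {i}. b u (z j)) = 0"
          proof (rule sum.neutral, intro ballI)
            fix j assume "j \<in> UNIV - {i}"
            then have "orth (Wf i) (Wf j)" using orthW by auto
            then show "b u (z j) = 0" using u zW unfolding orth_def by blast
          qed
          finally show ?thesis by simp
        qed
        then have "\<forall>u\<in>Wf i. b (z i) u = 0" using b_sym by metis
        then have "z i = 0" using osys_nondeg[OF D(1) WfD] zW unfolding nondegW_def by blast
        then show "w1 i = w2 i" unfolding z_def by simp
      qed
    qed
  qed
  have P4: "\<forall>g\<in>G. \<forall>i. \<exists>j. g ` Wf i = Wf j"
  proof (intro ballI allI)
    fix g i assume "g \<in> G"
    then have "g ` Wf i \<in> D" using osys_inv[OF D(1) _ WfD] by blast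
    then show "\<exists>j. g ` Wf i = Wf j" using imW by blast
  qed
  show ?thesis using P1 P2 P3 P4 by blast
qed

end

theorem theorem1p1:
  fixes Q :: "'a::field ^ 'n \<Rightarrow> 'a"
    and G :: "('a ^ 'n \<Rightarrow> 'a ^ 'n) set"
  assumes char: "(2::'a) \<noteq> 0"
    and odd_dim: "odd CARD('n)"
    and quad: "is_quadratic_form Q"
    and nondeg: "nondegenerate Q"
    and sub: "subgroup G (orth_group Q)"
    and fin: "finite G"
    and solv: "solvable ((orth_group Q)\<lparr>carrier := G\<rparr>)"
    and irr: "acts_irreducibly G"
  shows "\<exists>W :: 'n \<Rightarrow> ('a ^ 'n) set.
           (\<forall>i. vec.subspace (W i) \<and> vec.dim (W i) = 1)
         \<and> (\<forall>i j. i \<noteq> j \<longrightarrow> (\<forall>u\<in>W i. \<forall>v\<in>W j. polarization Q u v = 0))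
         \<and> (\<forall>v. \<exists>!w. (\<forall>i. w i \<in> W i) \<and> v = (\<Sum>i\<in>UNIV. w i))
         \<and> (\<forall>g\<in>G. \<forall>i. \<exists>j. g ` W i = W j)"
proof -
  have S: "setting Q G"
    using setting.intro[OF qf.intro[OF quad nondeg char] setting_axioms.intro[OF sub fin solv irr odd_dim]] .
  show ?thesis using setting.final_concl[OF S] .
qed


end
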